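(* Let $\alpha_0>\alpha_1>0$. Let $y_1(t)$, $t\in\mathbb{R}_{\ge0}$, be a continuous-time Poisson simple random walk of rate $\alpha_1$ with $y_1(0)=0$ (i.e. the counting function of a rate-$\alpha_1$ Poisson process on $(0,\infty)$). Given the trajectory of $y_1$, construct a process $x_1(t)$ with $x_1(0)=0$ that stays in the chamber $x_1(t)\ge y_1(t)$ for all $t$, as follows: $x_1$ jumps up by $1$ at rate $\alpha_0$ whenever $x_1(t)>y_1(t)$, and at rate $\alpha_0-\alpha_1$ whenever $x_1(t)=y_1(t)$; moreover, if $x_1(t-)=y_1(t-)$ and $y_1$ jumps up by $1$ at time $t$, then $x_1$ is deterministically pushed up by $1$ at the same time. Then $\{x_1(t)\}_{t\ge0}$ is a continuous-time Poisson simple random walk of rate $\alpha_0$. *)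

theory Defs
  imports "HOL-Probability.Probability"
begin

text \<open>Left limit of a real-indexed, nat-valued path (nat carries the discrete topology).\<close>
definition lft :: "(real \<Rightarrow> nat) \<Rightarrow> real \<Rightarrow> nat" where
  "lft f t = Lim (at_left t) f"

definition counting_path :: "(real \<Rightarrow> nat) \<Rightarrow> bool" where
  "counting_path f \<longleftrightarrow> f 0 = 0 \<and> mono_on {0..} f \<and>
     (\<forall>t\<ge>0. (f \<longlongrightarrow> f t) (at_right t))"

definition poisson_process :: "'w measure \<Rightarrow> real \<Rightarrow> ('w \<Rightarrow> real \<Rightarrow> nat) \<Rightarrow> bool" where
  "poisson_process M a N \<longleftrightarrow>
     (\<forall>\<omega>\<in>space M. counting_path (N \<omega>)) \<and>
     (\<forall>t. (\<lambda>\<omega>. N \<omega> t) \<in> measurable M (count_space UNIV)) \<and>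
     (\<forall>(ts :: nat \<Rightarrow> real) k. 0 \<le> ts 0 \<longrightarrow> (\<forall>i<k. ts i < ts (Suc i)) \<longrightarrow>
        prob_space.indep_vars M (\<lambda>_. count_space UNIV)
          (\<lambda>i \<omega>. N \<omega> (ts (Suc i)) - N \<omega> (ts i)) {..<k}) \<and>
     (\<forall>s t. 0 \<le> s \<longrightarrow> s < t \<longrightarrow>
        distr M (count_space UNIV) (\<lambda>\<omega>. N \<omega> t - N \<omega> s) = measure_pmf (poisson_pmf (a * (t - s))))"

end

theory Submission
  imports Defs
begin

lemma lft_const:
  assumes "a < t" "\<And>r. a < r \<Longrightarrow> r < t \<Longrightarrow> f r = c"
  shows "lft f t = c"
  unfolding lft_def
proof (rule tendsto_Lim)
  show "\<not> trivial_limit (at_left t)" by simp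
  show "(f \<longlongrightarrow> c) (at_left t)"
    unfolding tendsto_discrete
    using eventually_at_left_real[OF assms(1)] by (rule eventually_mono) (use assms(2) in auto)
qed

lemma cp_mono: "counting_path f \<Longrightarrow> 0 \<le> a \<Longrightarrow> a \<le> b \<Longrightarrow> f a \<le> f b"
  unfolding counting_path_def by (auto simp: mono_on_def)

lemma cp_zero: "counting_path f \<Longrightarrow> f 0 = 0"
  unfolding counting_path_def by auto

lemma cp_right: "counting_path f \<Longrightarrow> 0 \<le> t \<Longrightarrow> eventually (\<lambda>r. f r = f t) (at_right t)"
  unfolding counting_path_def tendsto_discrete by auto

lemma cp_right_ex:
  assumes "counting_path f" "0 \<le> s" "s < b"
  shows "\<exists>r. s < r \<and> r < b \<and> f r = f s"
proof -
  have "eventually (\<lambda>r. f r = f s \<and> r \<in> {s<..<b}) (at_right s)"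
    using cp_right[OF assms(1,2)] eventually_at_right_real[OF assms(3)] by (rule eventually_conj)
  from eventually_happens[OF this] show ?thesis by auto
qed

lemma cp_sup_aux:
  assumes f: "counting_path f" and a: "0 \<le> a" "a \<le> b"
  defines "s \<equiv> Sup {t \<in> {a..b}. f t = f a}"
  shows "a \<le> s" "s \<le> b" "\<And>t. a \<le> t \<Longrightarrow> t < s \<Longrightarrow> f t = f a"
    "s < b \<Longrightarrow> f s \<noteq> f a"
proof -
  let ?T = "{t \<in> {a..b}. f t = f a}"
  have ne: "?T \<noteq> {}" using a by auto
  have bdd: "bdd_above ?T" by (auto intro: bdd_aboveI[of _ b])
  show "a \<le> s" unfolding s_def using a by (intro cSup_upper bdd) auto
  show "s \<le> b" unfolding s_def using ne by (intro cSup_least) auto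
  show "f t = f a" if "a \<le> t" "t < s" for t
  proof -
    obtain t' where t': "t' \<in> ?T" "t < t'" using \<open>t < s\<close> unfolding s_def
      using less_cSup_iff[OF ne bdd] by auto
    have "f a \<le> f t" using cp_mono[OF f] a that by auto
    moreover have "f t \<le> f t'" using cp_mono[OF f, of t t'] a that t' by auto
    ultimately show ?thesis using t' by auto
  qed
  show "f s \<noteq> f a" if "s < b"
  proof
    assume eq: "f s = f a"
    have "0 \<le> s" using \<open>a \<le> s\<close> a by auto
    from cp_right_ex[OF f this that] obtain r where r: "s < r" "r < b" "f r = f s" by auto
    have "r \<in> ?T" using r eq \<open>a \<le> s\<close> by auto
    then have "r \<le> s" unfolding s_def by (intro cSup_upper bdd)
    then show False using r by auto
  qed
qed

lemma cp_no_jump: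
  assumes f: "counting_path f" and a: "0 \<le> a" "a \<le> b"
    and nj: "\<And>t. a < t \<Longrightarrow> t \<le> b \<Longrightarrow> f t = lft f t"
  shows "f b = f a"
proof -
  define s where "s = Sup {t \<in> {a..b}. f t = f a}"
  note S = cp_sup_aux[OF f a, folded s_def]
  have fs: "f s = f a"
  proof (cases "s = a")
    case False
    then have "a < s" using S(1) by auto
    have "lft f s = f a" using lft_const[OF \<open>a < s\<close>, of f "f a"] S(3) by (meson less_eq_real_def)
    then show ?thesis using nj[OF \<open>a < s\<close> S(2)] by auto
  qed simp
  have "s = b" using S(2) S(4) fs by (meson order.not_eq_order_implies_strict)
  then show ?thesis using fs by simp
qed

lemma cp_one_jump:
  assumes f: "counting_path f" and a: "0 \<le> a" "a \<le> b" and fb: "f b = Suc (f a)"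
  obtains s where "a < s" "s \<le> b" "\<And>t. a \<le> t \<Longrightarrow> t < s \<Longrightarrow> f t = f a"
    "\<And>t. s \<le> t \<Longrightarrow> t \<le> b \<Longrightarrow> f t = f b"
proof -
  define s where "s = Sup {t \<in> {a..b}. f t = f a}"
  note S = cp_sup_aux[OF f a, folded s_def]
  have fsa: "f s \<noteq> f a"
  proof (cases "s < b")
    case True then show ?thesis using S(4) by auto
  next
    case False then have "s = b" using S(2) by auto
    then show ?thesis using fb by auto
  qed
  then have "a < s" using S(1) by (cases "a = s") auto
  have "f a \<le> f s" using cp_mono[OF f] a S(1) by auto
  moreover have "f s \<le> f b" using cp_mono[OF f] a S(1,2) by auto
  ultimately have fs: "f s = f b" using fsa fb by auto
  show ?thesis
  proof
    show "a < s" "s \<le> b" by fact+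
    show "f t = f a" if "a \<le> t" "t < s" for t using S(3) that by blast
    show "f t = f b" if "s \<le> t" "t \<le> b" for t
    proof -
      have "f s \<le> f t" "f t \<le> f b" using cp_mono[OF f] that a S(1) by auto
      then show ?thesis using fs by auto
    qed
  qed
qed

definition jeq :: "(real \<Rightarrow> nat) \<Rightarrow> (real \<Rightarrow> nat) \<Rightarrow> (real \<Rightarrow> nat) \<Rightarrow> (real \<Rightarrow> nat) \<Rightarrow> bool" where
  "jeq xx yy pp qq \<longleftrightarrow> (\<forall>t>0.
           xx t = lft xx t
             + (if pp t \<noteq> lft pp t then 1 else 0)
             + (if qq t \<noteq> lft qq t \<and> lft xx t > lft yy t then 1 else 0)
             + (if yy t \<noteq> lft yy t \<and> lft xx t = lft yy t then 1 else 0))"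

lemma const_lft:
  assumes "\<And>r. c \<le> r \<Longrightarrow> r \<le> d \<Longrightarrow> f r = f c" "c < t" "t \<le> d"
  shows "lft f t = f t"
proof -
  have "lft f t = f c"
    by (rule lft_const[OF assms(2)], rule assms(1)) (use assms(3) in auto)
  moreover have "f t = f c" by (rule assms(1)) (use assms(2,3) in auto)
  ultimately show ?thesis by simp
qed

lemma quiet:
  assumes cx: "counting_path xx" and J: "jeq xx yy pp qq" and c: "0 \<le> c" "c \<le> d"
    and Y: "\<And>r. c \<le> r \<Longrightarrow> r \<le> d \<Longrightarrow> yy r = yy c"
    and P: "\<And>r. c \<le> r \<Longrightarrow> r \<le> d \<Longrightarrow> pp r = pp c"
    and Q: "\<And>r. c \<le> r \<Longrightarrow> r \<le> d \<Longrightarrow> qq r = qq c"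
  shows "xx d = xx c"
proof (rule cp_no_jump[OF cx c])
  fix t assume t: "c < t" "t \<le> d"
  have "lft yy t = yy t" "lft pp t = pp t" "lft qq t = qq t"
    using const_lft[where f=yy, OF Y t] const_lft[where f=pp, OF P t] const_lft[where f=qq, OF Q t] by auto
  moreover have "t > 0" using t c by auto
  ultimately show "xx t = lft xx t" using J unfolding jeq_def by auto
qed


lemma const_between:
  assumes "counting_path f" "0 \<le> a" "f b = f a" "a \<le> r" "r \<le> b"
  shows "f r = f a"
  using cp_mono[OF assms(1), of a r] cp_mono[OF assms(1), of r b] assms by auto

lemma cP1:
  fixes a b s t :: real
  assumes "\<And>r. a \<le> r \<Longrightarrow> r \<le> b \<Longrightarrow> f r = f a" "s \<le> b" "a \<le> t" "t < s"
  shows "f t = f a"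
proof -
  have "a \<le> t" "t \<le> b" using assms(2-4) by auto
  then show ?thesis by (rule assms(1))
qed

lemma cP2:
  fixes a b s t :: real
  assumes "\<And>r. a \<le> r \<Longrightarrow> r \<le> b \<Longrightarrow> f r = f a" "f b = f a" "a \<le> s" "s \<le> t" "t \<le> b"
  shows "f t = f b"
proof -
  have "a \<le> t" "t \<le> b" using assms(3-5) by auto
  then show ?thesis unfolding assms(2) by (rule assms(1))
qed

lemma jump_at:
  assumes cx: "counting_path xx" and J: "jeq xx yy pp qq" and a: "0 \<le> a" "a < s" "s \<le> b"
    and Y1: "\<And>t. a \<le> t \<Longrightarrow> t < s \<Longrightarrow> yy t = yy a" and Y2: "\<And>t. s \<le> t \<Longrightarrow> t \<le> b \<Longrightarrow> yy t = yy b"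
    and P1: "\<And>t. a \<le> t \<Longrightarrow> t < s \<Longrightarrow> pp t = pp a" and P2: "\<And>t. s \<le> t \<Longrightarrow> t \<le> b \<Longrightarrow> pp t = pp b"
    and Q1: "\<And>t. a \<le> t \<Longrightarrow> t < s \<Longrightarrow> qq t = qq a" and Q2: "\<And>t. s \<le> t \<Longrightarrow> t \<le> b \<Longrightarrow> qq t = qq b"
  shows "xx b = xx a + (if pp b \<noteq> pp a then 1 else 0)
             + (if qq b \<noteq> qq a \<and> xx a > yy a then 1 else 0)
             + (if yy b \<noteq> yy a \<and> xx a = yy a then 1 else 0)"
proof -
  have xa: "xx t = xx a" if "a \<le> t" "t < s" for t
  proof (rule quiet[OF cx J a(1) that(1)])
    fix r assume r: "a \<le> r" "r \<le> t"
    then have "r < s" using that by linarith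
    show "yy r = yy a" by (rule Y1) fact+
    show "pp r = pp a" by (rule P1) fact+
    show "qq r = qq a" by (rule Q1) fact+
  qed
  have lx: "lft xx s = xx a" by (rule lft_const[OF a(2)], rule xa) auto
  have ly: "lft yy s = yy a" by (rule lft_const[OF a(2)], rule Y1) auto
  have lp: "lft pp s = pp a" by (rule lft_const[OF a(2)], rule P1) auto
  have lq: "lft qq s = qq a" by (rule lft_const[OF a(2)], rule Q1) auto
  have sb: "s \<le> s" "s \<le> b" using a by auto
  have ys: "yy s = yy b" "pp s = pp b" "qq s = qq b" using Y2[OF sb] P2[OF sb] Q2[OF sb] by auto
  have "s > 0" using a by auto
  then have xs: "xx s = lft xx s
             + (if pp s \<noteq> lft pp s then 1 else 0)
             + (if qq s \<noteq> lft qq s \<and> lft xx s > lft yy s then 1 else 0)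
             + (if yy s \<noteq> lft yy s \<and> lft xx s = lft yy s then 1 else 0)"
    using J unfolding jeq_def by blast
  have "xx b = xx s"
  proof (rule quiet[OF cx J _ a(3)])
    show "0 \<le> s" using a by linarith
    fix r assume r: "s \<le> r" "r \<le> b"
    show "yy r = yy s" unfolding ys by (rule Y2) fact+
    show "pp r = pp s" unfolding ys by (rule P2) fact+
    show "qq r = qq s" unfolding ys by (rule Q2) fact+
  qed
  then show ?thesis using xs unfolding lx ly lp lq ys by simp
qed

lemma path_step:
  assumes cy: "counting_path yy" and cp: "counting_path pp" and cq: "counting_path qq"
    and cx: "counting_path xx" and J: "jeq xx yy pp qq" and a: "0 \<le> a" "a < b"
    and small: "(yy b - yy a) + (pp b - pp a) + (qq b - qq a) \<le> 1"
    and inv: "yy a \<le> xx a"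
  shows "xx b = xx a + (pp b - pp a) + (if yy a < xx a then qq b - qq a else yy b - yy a) \<and> yy b \<le> xx b"
proof -
  have my: "yy a \<le> yy b" and mp: "pp a \<le> pp b" and mq: "qq a \<le> qq b"
    using cp_mono[OF cy] cp_mono[OF cp] cp_mono[OF cq] a by auto
  have cases3: "(yy b = yy a \<and> pp b = pp a \<and> qq b = qq a) \<or>
     (yy b = Suc (yy a) \<and> pp b = pp a \<and> qq b = qq a) \<or>
     (yy b = yy a \<and> pp b = Suc (pp a) \<and> qq b = qq a) \<or>
     (yy b = yy a \<and> pp b = pp a \<and> qq b = Suc (qq a))"
    using small my mp mq by linarith
  have ab: "a \<le> b" using a by linarith
  have cb: "f r = f a" if "counting_path f" "f b = f a" "a \<le> r" "r \<le> b" for f r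
    using const_between[OF that(1) a(1) that(2-4)] .
  from cases3 show ?thesis
  proof (elim disjE conjE)
    assume h: "yy b = yy a" "pp b = pp a" "qq b = qq a"
    have "xx b = xx a"
    proof (rule quiet[OF cx J a(1) ab])
      fix r assume r: "a \<le> r" "r \<le> b"
      show "yy r = yy a" by (rule cb[OF cy h(1) r])
      show "pp r = pp a" by (rule cb[OF cp h(2) r])
      show "qq r = qq a" by (rule cb[OF cq h(3) r])
    qed
    then show ?thesis using h inv by simp
  next
    assume h: "yy b = Suc (yy a)" "pp b = pp a" "qq b = qq a"
    obtain s where s: "a < s" "s \<le> b" "\<And>t. a \<le> t \<Longrightarrow> t < s \<Longrightarrow> yy t = yy a"
      "\<And>t. s \<le> t \<Longrightarrow> t \<le> b \<Longrightarrow> yy t = yy b"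
      using cp_one_jump[OF cy a(1) ab h(1)] by blast
    have sa: "a \<le> s" using s(1) by linarith
    have "xx b = xx a + (if pp b \<noteq> pp a then 1 else 0)
             + (if qq b \<noteq> qq a \<and> xx a > yy a then 1 else 0)
             + (if yy b \<noteq> yy a \<and> xx a = yy a then 1 else 0)"
      by (rule jump_at[OF cx J a(1) s(1,2) s(3,4)
          cP1[where f=pp, OF cb[OF cp h(2)] s(2)] cP2[where f=pp, OF cb[OF cp h(2)] h(2) sa]
          cP1[where f=qq, OF cb[OF cq h(3)] s(2)] cP2[where f=qq, OF cb[OF cq h(3)] h(3) sa]])
    then show ?thesis using h inv by auto
  next
    assume h: "yy b = yy a" "pp b = Suc (pp a)" "qq b = qq a"
    obtain s where s: "a < s" "s \<le> b" "\<And>t. a \<le> t \<Longrightarrow> t < s \<Longrightarrow> pp t = pp a"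
      "\<And>t. s \<le> t \<Longrightarrow> t \<le> b \<Longrightarrow> pp t = pp b"
      using cp_one_jump[OF cp a(1) ab h(2)] by blast
    have sa: "a \<le> s" using s(1) by linarith
    have "xx b = xx a + (if pp b \<noteq> pp a then 1 else 0)
             + (if qq b \<noteq> qq a \<and> xx a > yy a then 1 else 0)
             + (if yy b \<noteq> yy a \<and> xx a = yy a then 1 else 0)"
      by (rule jump_at[OF cx J a(1) s(1,2)
          cP1[where f=yy, OF cb[OF cy h(1)] s(2)] cP2[where f=yy, OF cb[OF cy h(1)] h(1) sa]
          s(3,4)
          cP1[where f=qq, OF cb[OF cq h(3)] s(2)] cP2[where f=qq, OF cb[OF cq h(3)] h(3) sa]])
    then show ?thesis using h inv by auto
  next
    assume h: "yy b = yy a" "pp b = pp a" "qq b = Suc (qq a)"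
    obtain s where s: "a < s" "s \<le> b" "\<And>t. a \<le> t \<Longrightarrow> t < s \<Longrightarrow> qq t = qq a"
      "\<And>t. s \<le> t \<Longrightarrow> t \<le> b \<Longrightarrow> qq t = qq b"
      using cp_one_jump[OF cq a(1) ab h(3)] by blast
    have sa: "a \<le> s" using s(1) by linarith
    have "xx b = xx a + (if pp b \<noteq> pp a then 1 else 0)
             + (if qq b \<noteq> qq a \<and> xx a > yy a then 1 else 0)
             + (if yy b \<noteq> yy a \<and> xx a = yy a then 1 else 0)"
      by (rule jump_at[OF cx J a(1) s(1,2)
          cP1[where f=yy, OF cb[OF cy h(1)] s(2)] cP2[where f=yy, OF cb[OF cy h(1)] h(1) sa]
          cP1[where f=pp, OF cb[OF cp h(2)] s(2)] cP2[where f=pp, OF cb[OF cp h(2)] h(2) sa]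
          s(3,4)])
    then show ?thesis using h inv by auto
  qed
qed


lemma pois_conv:
  fixes a b :: real
  assumes "0 < a" "0 < b"
  shows "(\<Sum>k\<le>n. pmf (poisson_pmf a) k * pmf (poisson_pmf b) (n - k)) = pmf (poisson_pmf (a + b)) n"
proof -
  have "(\<Sum>k\<le>n. pmf (poisson_pmf a) k * pmf (poisson_pmf b) (n - k))
      = (\<Sum>k\<le>n. (exp (-(a+b)) / fact n) * (real (n choose k) * a ^ k * b ^ (n - k)))"
  proof (rule sum.cong[OF refl])
    fix k assume k: "k \<in> {..n}"
    then have kn: "k \<le> n" by auto
    have "real (n choose k) = fact n / (fact k * fact (n - k))" using binomial_fact[OF kn] by simp
    then show "pmf (poisson_pmf a) k * pmf (poisson_pmf b) (n - k) =
      (exp (-(a+b)) / fact n) * (real (n choose k) * a ^ k * b ^ (n - k))"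
      using assms by (simp add: exp_add[symmetric] field_simps exp_diff)
  qed
  also have "\<dots> = (exp (-(a+b)) / fact n) * (a + b) ^ n"
    by (simp add: binomial_ring sum_distrib_left)
  also have "\<dots> = pmf (poisson_pmf (a + b)) n" using assms by simp
  finally show ?thesis .
qed

lemma pois_ge1:
  fixes a :: real assumes "0 < a"
  shows "measure_pmf.prob (poisson_pmf a) {n. 1 \<le> n} \<le> a"
proof -
  have "{n::nat. 1 \<le> n} = UNIV - {0}" by auto
  then have "measure_pmf.prob (poisson_pmf a) {n. 1 \<le> n} = 1 - pmf (poisson_pmf a) 0"
    using measure_pmf.prob_compl[of "{0}" "poisson_pmf a"] by (simp add: measure_pmf_single)
  also have "\<dots> = 1 - exp (-a)" using assms by simp
  also have "\<dots> \<le> a" using exp_ge_add_one_self[of "-a"] by simp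
  finally show ?thesis .
qed

lemma pois_ge2:
  fixes a :: real assumes "0 < a"
  shows "measure_pmf.prob (poisson_pmf a) {n. 2 \<le> n} \<le> a ^ 2"
proof -
  have "{n::nat. 2 \<le> n} = UNIV - {0, 1}" by auto
  then have "measure_pmf.prob (poisson_pmf a) {n. 2 \<le> n} = 1 - measure_pmf.prob (poisson_pmf a) {0,1}"
    using measure_pmf.prob_compl[of "{0,1}" "poisson_pmf a"] by simp
  also have "measure_pmf.prob (poisson_pmf a) {0,1} = pmf (poisson_pmf a) 0 + pmf (poisson_pmf a) 1"
    by (subst measure_measure_pmf_finite) auto
  also have "\<dots> = exp (-a) * (1 + a)" using assms by (simp add: algebra_simps)
  finally have eq: "measure_pmf.prob (poisson_pmf a) {n. 2 \<le> n} = 1 - exp (-a) * (1 + a)" .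
  have "1 - a \<le> exp (-a)" using exp_ge_add_one_self[of "-a"] by simp
  then have "(1 - a) * (1 + a) \<le> exp (-a) * (1 + a)" using assms by (intro mult_right_mono) auto
  then show ?thesis unfolding eq by (simp add: algebra_simps power2_eq_square)
qed


lemma meas2:
  fixes f :: "'a \<Rightarrow> 'c::countable" and h :: "'a \<Rightarrow> 'd::countable"
  assumes "f \<in> measurable N (count_space UNIV)" "h \<in> measurable N (count_space UNIV)"
  shows "(\<lambda>\<omega>. F (f \<omega>) (h \<omega>) :: 'b) \<in> measurable N (count_space UNIV)"
proof -
  have "\<And>a. (\<lambda>\<omega>. F a (h \<omega>)) \<in> measurable N (count_space UNIV)"
    using measurable_compose_countable'[where f="\<lambda>b \<omega>. F a b" and g=h and I=UNIV for a] assms(2)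
    by auto
  then show ?thesis
    using measurable_compose_countable'[where f="\<lambda>a \<omega>. F a (h \<omega>)" and g=f and I=UNIV] assms(1)
    by auto
qed

locale pws = prob_space M for M :: "'w measure" +
  fixes \<alpha>0 \<alpha>1 :: real and y p q x :: "'w \<Rightarrow> real \<Rightarrow> nat"
  assumes a01: "\<alpha>0 > \<alpha>1" and a1: "\<alpha>1 > 0"
    and Py: "poisson_process M \<alpha>1 y"
    and Pp: "poisson_process M (\<alpha>0 - \<alpha>1) p"
    and Pq: "poisson_process M \<alpha>1 q"
    and IND: "indep_vars (\<lambda>_. Pi\<^sub>M UNIV (\<lambda>_. count_space UNIV))
           (\<lambda>i. if i = (0::nat) then y else if i = 1 then p else q) {0, 1, 2}"
    and xmeas: "\<forall>t. (\<lambda>\<omega>. x \<omega> t) \<in> measurable M (count_space UNIV)"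
    and xcp: "\<forall>\<omega>\<in>space M. counting_path (x \<omega>)"
    and xj: "\<forall>\<omega>\<in>space M. \<forall>t>0.
           x \<omega> t = lft (x \<omega>) t
             + (if p \<omega> t \<noteq> lft (p \<omega>) t then 1 else 0)
             + (if q \<omega> t \<noteq> lft (q \<omega>) t \<and> lft (x \<omega>) t > lft (y \<omega>) t then 1 else 0)
             + (if y \<omega> t \<noteq> lft (y \<omega>) t \<and> lft (x \<omega>) t = lft (y \<omega>) t then 1 else 0)"
begin

definition W :: "nat \<Rightarrow> 'w \<Rightarrow> real \<Rightarrow> nat" where
  "W c = (if c = 0 then y else if c = 1 then p else q)"

definition rate :: "nat \<Rightarrow> real" where
  "rate c = (if c = 0 then \<alpha>1 else if c = 1 then \<alpha>0 - \<alpha>1 else \<alpha>1)"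

lemma rate_pos: "rate c > 0" using a01 a1 unfolding rate_def by auto

lemma PW: "poisson_process M (rate c) (W c)"
  unfolding W_def rate_def using Py Pp Pq by auto

lemma Wmeas: "(\<lambda>\<omega>. W c \<omega> t) \<in> measurable M (count_space UNIV)"
  using PW[of c] unfolding poisson_process_def by auto

lemma Wcp: "\<omega> \<in> space M \<Longrightarrow> counting_path (W c \<omega>)"
  using PW[of c] unfolding poisson_process_def by auto

definition inc :: "(nat \<Rightarrow> real) \<Rightarrow> nat \<Rightarrow> nat \<Rightarrow> 'w \<Rightarrow> nat" where
  "inc g c k \<omega> = W c \<omega> (g (Suc k)) - W c \<omega> (g k)"

lemma inc_meas: "inc g c k \<in> measurable M (count_space UNIV)"
  unfolding inc_def by (rule meas2[OF Wmeas Wmeas])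

definition grid :: "(nat \<Rightarrow> real) \<Rightarrow> bool" where
  "grid g \<longleftrightarrow> strict_mono g \<and> g 0 = 0"

definition Ev :: "(nat \<Rightarrow> real) \<Rightarrow> nat \<times> nat \<Rightarrow> 'w set set" where
  "Ev g j = {inc g (fst j) (snd j) -` S \<inter> space M | S. True}"

lemma Ev_events: "Ev g j \<subseteq> events"
  unfolding Ev_def using inc_meas by (auto intro: measurable_sets)

lemma inc_dist:
  assumes "grid g"
  shows "prob (inc g c k -` S \<inter> space M) = measure_pmf.prob (poisson_pmf (rate c * (g (Suc k) - g k))) S"
proof -
  have sm: "strict_mono g" "g 0 = 0" using assms unfolding grid_def by auto
  have g: "0 \<le> g k" "g k < g (Suc k)"
    using strict_mono_less_eq[OF sm(1), of 0 k] sm(2) strict_monoD[OF sm(1), of k "Suc k"] by auto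
  have "distr M (count_space UNIV) (inc g c k) = measure_pmf (poisson_pmf (rate c * (g (Suc k) - g k)))"
    using PW[of c] g unfolding poisson_process_def inc_def[abs_def] by auto
  then show ?thesis using measure_distr[OF inc_meas, of S g c k] by simp
qed

lemma inc_indep:
  assumes "grid g"
  shows "indep_vars (\<lambda>_. count_space UNIV) (inc g c) {..<K}"
proof -
  have "\<forall>i<K. g i < g (Suc i)" "0 \<le> g 0" using assms unfolding grid_def strict_mono_def by auto
  then show ?thesis using PW[of c] unfolding poisson_process_def inc_def[abs_def] by blast
qed

lemma EI:
  assumes gr: "grid g"
  shows "indep_sets (Ev g) ({0,1,2} \<times> UNIV)"
proof (rule indep_setsI)
  show "Ev g i \<subseteq> events" for i by (rule Ev_events)
  fix A J assume J: "J \<noteq> {}" "J \<subseteq> {0,1,2} \<times> UNIV" "finite J" and A: "\<forall>j\<in>J. A j \<in> Ev g j"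
  then have "\<forall>j\<in>J. \<exists>S. A j = inc g (fst j) (snd j) -` S \<inter> space M" unfolding Ev_def by auto
  then obtain S where S: "\<And>j. j \<in> J \<Longrightarrow> A j = inc g (fst j) (snd j) -` S j \<inter> space M"
    by metis
  define Jc where "Jc c = {k. (c, k) \<in> J}" for c
  have finJ: "finite (Jc c)" for c
  proof -
    have "Jc c \<subseteq> snd ` J" unfolding Jc_def by force
    then show ?thesis using J(3) by (meson finite_imageI finite_subset)
  qed
  have Jeq: "J = Sigma {0,1,2} Jc" using J(2) unfolding Jc_def by auto
  define WS where "WS c = {f :: real \<Rightarrow> nat. \<forall>k\<in>Jc c. f (g (Suc k)) - f (g k) \<in> S (c, k)}" for c
  have WSm: "WS c \<in> sets (Pi\<^sub>M UNIV (\<lambda>_. count_space UNIV))" for c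
  proof -
    have "Measurable.pred (Pi\<^sub>M UNIV (\<lambda>_. count_space UNIV)) (\<lambda>f. \<forall>k\<in>Jc c. f (g (Suc k)) - f (g k) \<in> S (c, k))"
    proof (rule pred_intros_finite[OF finJ])
      fix k
      have "(\<lambda>f::real\<Rightarrow>nat. f (g (Suc k)) - f (g k)) \<in> measurable (Pi\<^sub>M UNIV (\<lambda>_. count_space UNIV)) (count_space UNIV)"
        by (rule meas2) (rule measurable_component_singleton, simp)+
      then show "Measurable.pred (Pi\<^sub>M UNIV (\<lambda>_. count_space UNIV)) (\<lambda>f. f (g (Suc k)) - f (g k) \<in> S (c, k))"
        by (rule pred_sets2[rotated]) simp
    qed
    then show ?thesis unfolding pred_def WS_def by (simp add: space_PiM)
  qed
  define B where "B c = {\<omega> \<in> space M. \<forall>k\<in>Jc c. inc g c k \<omega> \<in> S (c, k)}" for c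
  have B_eq: "B c = (if c = (0::nat) then y else if c = 1 then p else q) -` WS c \<inter> space M" for c
    unfolding B_def WS_def inc_def W_def by auto
  have "prob (\<Inter>c\<in>{0,1,2}. B c) = (\<Prod>c\<in>{0,1,2}. prob (B c))"
    unfolding B_eq by (rule indep_varsD[OF IND]) (use WSm in auto)
  moreover have "(\<Inter>j\<in>J. A j) = (\<Inter>c\<in>{0,1,2}. B c)"
  proof -
    obtain j0 where "j0 \<in> J" using J(1) by auto
    then have "(\<Inter>j\<in>J. A j) \<subseteq> space M" using S by auto
    then show ?thesis using S J(2) unfolding B_def Jc_def by (auto; fastforce)
  qed
  moreover have "prob (B c) = (\<Prod>k\<in>Jc c. prob (A (c, k)))" for c
  proof (cases "Jc c = {}")
    case True
    then show ?thesis unfolding B_def by (simp add: prob_space)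
  next
    case False
    define K where "K = Suc (Max (Jc c))"
    have JK: "Jc c \<subseteq> {..<K}" unfolding K_def using finJ by (auto simp: less_Suc_eq_le)
    have "prob (\<Inter>k\<in>Jc c. inc g c k -` S (c, k) \<inter> space M) = (\<Prod>k\<in>Jc c. prob (inc g c k -` S (c, k) \<inter> space M))"
      by (rule indep_varsD[OF inc_indep[OF gr, of c K] False finJ JK]) simp
    moreover have "(\<Inter>k\<in>Jc c. inc g c k -` S (c, k) \<inter> space M) = B c"
      unfolding B_def using False by auto
    moreover have "A (c, k) = inc g c k -` S (c, k) \<inter> space M" if "k \<in> Jc c" for k
      using S[of "(c,k)"] that unfolding Jc_def by auto
    ultimately show ?thesis by simp
  qed
  moreover have "(\<Prod>j\<in>Sigma {0,1,2} Jc. prob (A j)) = (\<Prod>c\<in>{0,1,2}. \<Prod>k\<in>Jc c. prob (A (c,k)))"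
    using prod.Sigma[of "{0,1,2::nat}" Jc "\<lambda>c k. prob (A (c,k))"] finJ by (simp add: case_prod_eta)
  ultimately show "prob (\<Inter>j\<in>J. A j) = (\<Prod>j\<in>J. prob (A j))"
    unfolding Jeq by simp
qed

end

fun xd :: "(nat \<Rightarrow> real) \<Rightarrow> (real \<Rightarrow> nat) \<Rightarrow> (real \<Rightarrow> nat) \<Rightarrow> (real \<Rightarrow> nat) \<Rightarrow> nat \<Rightarrow> nat" where
  "xd g yy pp qq 0 = 0"
| "xd g yy pp qq (Suc i) = xd g yy pp qq i + (pp (g (Suc i)) - pp (g i))
     + (if yy (g i) < xd g yy pp qq i then qq (g (Suc i)) - qq (g i) else yy (g (Suc i)) - yy (g i))"

lemma meas_count_compose:
  fixes f :: "'a \<Rightarrow> 'c::countable"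
  assumes "f \<in> measurable N (count_space UNIV)"
  shows "(\<lambda>\<omega>. F (f \<omega>)) \<in> measurable N (count_space UNIV)"
  using measurable_compose[OF assms measurable_count_space[where f=F]] by (simp add: comp_def)

context pws
begin

definition Gen :: "(nat \<Rightarrow> real) \<Rightarrow> nat \<Rightarrow> 'w set set" where
  "Gen g i = (\<Union>j\<in>{0,1,2} \<times> {..<i}. Ev g j)"

definition Fs :: "(nat \<Rightarrow> real) \<Rightarrow> nat \<Rightarrow> 'w measure" where
  "Fs g i = sigma (space M) (Gen g i)"

lemma Gen_events: "Gen g i \<subseteq> events"
  unfolding Gen_def using Ev_events by auto

lemma Gen_Pow: "Gen g i \<subseteq> Pow (space M)"
  using Gen_events[of g i] by (auto dest: sets.sets_into_space)

lemma sets_Fs: "sets (Fs g i) = sigma_sets (space M) (Gen g i)"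
  unfolding Fs_def by (rule sets_measure_of[OF Gen_Pow])

lemma space_Fs: "space (Fs g i) = space M"
  unfolding Fs_def by (rule space_measure_of[OF Gen_Pow])

lemma Fs_events: "sets (Fs g i) \<subseteq> events"
  unfolding sets_Fs by (rule sets.sigma_sets_subset[OF Gen_events])

lemma Fs_mono: "i \<le> j \<Longrightarrow> sets (Fs g i) \<subseteq> sets (Fs g j)"
  unfolding sets_Fs by (rule sigma_sets_mono') (unfold Gen_def, intro UN_mono, auto)

lemma mFs_iff: "f \<in> measurable (Fs g i) (count_space (UNIV :: 'c::countable set)) \<longleftrightarrow>
   (\<forall>a. f -` {a} \<inter> space M \<in> sets (Fs g i))"
  unfolding measurable_count_space_eq2_countable space_Fs by auto

lemma mFs_mono: "f \<in> measurable (Fs g i) (count_space (UNIV :: 'c::countable set)) \<Longrightarrow> i \<le> j \<Longrightarrow>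
   f \<in> measurable (Fs g j) (count_space UNIV)"
  unfolding mFs_iff using Fs_mono[of i j g] by (simp add: subset_iff)

lemma mFs_M: "f \<in> measurable (Fs g i) (count_space (UNIV :: 'c::countable set)) \<Longrightarrow>
   f \<in> measurable M (count_space UNIV)"
  unfolding mFs_iff measurable_count_space_eq2_countable using Fs_events[of g i] by (simp add: subset_iff space_Fs)

lemma inc_Fs: "c \<in> {0,1,2} \<Longrightarrow> k < i \<Longrightarrow> inc g c k \<in> measurable (Fs g i) (count_space UNIV)"
  unfolding mFs_iff sets_Fs
proof
  fix a assume "c \<in> {0,1,2}" "k < i"
  then have ck: "(c, k) \<in> {0,1,2} \<times> {..<i}" by simp
  have "inc g c k -` {a} \<inter> space M \<in> Ev g (c, k)" unfolding Ev_def by auto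
  then have "inc g c k -` {a} \<inter> space M \<in> Gen g i" unfolding Gen_def using ck by (rule UN_I[rotated])
  then show "inc g c k -` {a} \<inter> space M \<in> sigma_sets (space M) (Gen g i)" by auto
qed

definition Xd :: "(nat \<Rightarrow> real) \<Rightarrow> nat \<Rightarrow> 'w \<Rightarrow> nat" where
  "Xd g i \<omega> = xd g (y \<omega>) (p \<omega>) (q \<omega>) i"

lemma W012: "W 0 = y" "W 1 = p" "W 2 = q" unfolding W_def by auto

lemma Xd_Suc: "Xd g (Suc i) \<omega> = Xd g i \<omega> + inc g 1 i \<omega> +
   (if y \<omega> (g i) < Xd g i \<omega> then inc g 2 i \<omega> else inc g 0 i \<omega>)"
  unfolding Xd_def inc_def W012 by simp

lemma Xd_0: "Xd g 0 \<omega> = 0" unfolding Xd_def by simp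

lemma grid_nonneg: "grid g \<Longrightarrow> 0 \<le> g k"
  unfolding grid_def using strict_mono_less_eq[of g 0 k] by auto

lemma grid_less: "grid g \<Longrightarrow> g k < g (Suc k)"
  unfolding grid_def by (auto intro: strict_monoD)

lemma yg_Fs:
  assumes "grid g"
  shows "(\<lambda>\<omega>. y \<omega> (g i)) \<in> measurable (Fs g i) (count_space UNIV)"
proof (induction i)
  case 0
  have "(\<lambda>\<omega>. y \<omega> (g 0)) \<in> measurable (Fs g 0) (count_space UNIV) \<longleftrightarrow> (\<lambda>\<omega>. 0::nat) \<in> measurable (Fs g 0) (count_space UNIV)"
    by (rule measurable_cong) (use assms Wcp[of _ 0] cp_zero in \<open>auto simp: grid_def space_Fs W012\<close>)
  then show ?case by simp
next
  case (Suc i)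
  have "(\<lambda>\<omega>. y \<omega> (g (Suc i))) \<in> measurable (Fs g (Suc i)) (count_space UNIV) \<longleftrightarrow>
      (\<lambda>\<omega>. y \<omega> (g i) + inc g 0 i \<omega>) \<in> measurable (Fs g (Suc i)) (count_space UNIV)"
  proof (rule measurable_cong)
    fix \<omega> assume "\<omega> \<in> space (Fs g (Suc i))"
    then have "counting_path (y \<omega>)" using Wcp[of \<omega> 0] unfolding space_Fs W012 by auto
    then have "y \<omega> (g i) \<le> y \<omega> (g (Suc i))"
      using cp_mono grid_nonneg[OF assms] grid_less[OF assms] by (meson less_imp_le)
    then show "y \<omega> (g (Suc i)) = y \<omega> (g i) + inc g 0 i \<omega>" unfolding inc_def W012 by simp
  qed
  moreover have "(\<lambda>\<omega>. y \<omega> (g i) + inc g 0 i \<omega>) \<in> measurable (Fs g (Suc i)) (count_space UNIV)"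
    by (rule meas2[OF mFs_mono[OF Suc.IH] inc_Fs]) auto
  ultimately show ?case by simp
qed

lemma Xd_Fs:
  assumes "grid g"
  shows "Xd g i \<in> measurable (Fs g i) (count_space UNIV)"
proof (induction i)
  case 0
  then show ?case unfolding Xd_0[abs_def] by simp
next
  case (Suc i)
  have m1: "Xd g i \<in> measurable (Fs g (Suc i)) (count_space UNIV)"
    by (rule mFs_mono[OF Suc.IH]) auto
  have m2: "(\<lambda>\<omega>. y \<omega> (g i)) \<in> measurable (Fs g (Suc i)) (count_space UNIV)"
    by (rule mFs_mono[OF yg_Fs[OF assms]]) auto
  have m3: "inc g c i \<in> measurable (Fs g (Suc i)) (count_space UNIV)" if "c \<in> {0,1,2}" for c
    by (rule inc_Fs) (use that in auto)
  have m30: "inc g 0 i \<in> measurable (Fs g (Suc i)) (count_space UNIV)" by (rule m3) simp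
  have m31: "inc g 1 i \<in> measurable (Fs g (Suc i)) (count_space UNIV)" by (rule m3) simp
  have m32: "inc g 2 i \<in> measurable (Fs g (Suc i)) (count_space UNIV)" by (rule m3) simp
  have t1: "(\<lambda>\<omega>. (inc g 1 i \<omega>, inc g 2 i \<omega>)) \<in> measurable (Fs g (Suc i)) (count_space UNIV)"
    by (rule meas2[where F=Pair, OF m31 m32])
  have t2: "(\<lambda>\<omega>. (inc g 0 i \<omega>, inc g 1 i \<omega>, inc g 2 i \<omega>)) \<in> measurable (Fs g (Suc i)) (count_space UNIV)"
    by (rule meas2[where F=Pair, OF m30 t1])
  have t3: "(\<lambda>\<omega>. (y \<omega> (g i), inc g 0 i \<omega>, inc g 1 i \<omega>, inc g 2 i \<omega>)) \<in> measurable (Fs g (Suc i)) (count_space UNIV)"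
    by (rule meas2[where F=Pair, OF m2 t2])
  have t4: "(\<lambda>\<omega>. (Xd g i \<omega>, y \<omega> (g i), inc g 0 i \<omega>, inc g 1 i \<omega>, inc g 2 i \<omega>)) \<in> measurable (Fs g (Suc i)) (count_space UNIV)"
    by (rule meas2[where F=Pair, OF m1 t3])
  have fin: "(\<lambda>\<omega>. (\<lambda>(a, b, c0, c1, c2). a + c1 + (if (b::nat) < a then c2 else c0))
      (Xd g i \<omega>, y \<omega> (g i), inc g 0 i \<omega>, inc g 1 i \<omega>, inc g 2 i \<omega>)) \<in> measurable (Fs g (Suc i)) (count_space UNIV)"
    by (rule meas_count_compose[where F="\<lambda>(a, b, c0, c1, c2). a + c1 + (if (b::nat) < a then c2 else c0)", OF t4])
  have eq: "Xd g (Suc i) = (\<lambda>\<omega>. (\<lambda>(a, b, c0, c1, c2). a + c1 + (if (b::nat) < a then c2 else c0))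
      (Xd g i \<omega>, y \<omega> (g i), inc g 0 i \<omega>, inc g 1 i \<omega>, inc g 2 i \<omega>))"
    by (rule ext) (simp only: Xd_Suc prod.case)
  show ?case unfolding eq by (rule fin)
qed

lemma Xd_M: "grid g \<Longrightarrow> Xd g i \<in> measurable M (count_space UNIV)"
  by (rule mFs_M[OF Xd_Fs])

definition pm :: "(nat \<Rightarrow> real) \<Rightarrow> nat \<Rightarrow> nat \<Rightarrow> nat set \<Rightarrow> real" where
  "pm g c i S = measure_pmf.prob (poisson_pmf (rate c * (g (Suc i) - g i))) S"

lemma Ev_Int_stable: "Int_stable (Ev g j)"
  unfolding Int_stable_def Ev_def
  by (auto, rule_tac x="S \<inter> Sa" in exI, auto)

lemma KI:
  assumes gr: "grid g" and A: "A \<in> sets (Fs g i)"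
  shows "prob (A \<inter> {\<omega>\<in>space M. inc g 0 i \<omega> \<in> Sa \<and> inc g 1 i \<omega> \<in> Sb \<and> inc g 2 i \<omega> \<in> Sc})
    = prob A * pm g 0 i Sa * pm g 1 i Sb * pm g 2 i Sc"
proof -
  define I' where "I' j = (if j = 0 then {0,1,2} \<times> {..<i} else {(j - 1, i)})" for j :: nat
  have ind: "indep_sets (\<lambda>j. sigma_sets (space M) (\<Union>k\<in>I' j. Ev g k)) {0,1,2,3}"
  proof (rule indep_sets_collect_sigma)
    show "indep_sets (Ev g) (\<Union>j\<in>{0,1,2,3}. I' j)"
      by (rule indep_sets_mono_index[OF _ EI[OF gr]]) (auto simp: I'_def)
    show "Int_stable (Ev g k)" for k by (rule Ev_Int_stable)
    show "disjoint_family_on I' {0,1,2,3}"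
      unfolding disjoint_family_on_def I'_def by auto
  qed
  define B where "B j = (if j = 0 then A else inc g (j - 1) i -` (if j = 1 then Sa else if j = 2 then Sb else Sc) \<inter> space M)" for j :: nat
  have "prob (\<Inter>j\<in>{0,1,2,3}. B j) = (\<Prod>j\<in>{0,1,2,3}. prob (B j))"
  proof (rule indep_setsD[OF ind])
    show "\<forall>j\<in>{0,1,2,3}. B j \<in> sigma_sets (space M) (\<Union>k\<in>I' j. Ev g k)"
    proof
      fix j :: nat assume j: "j \<in> {0,1,2,3}"
      show "B j \<in> sigma_sets (space M) (\<Union>k\<in>I' j. Ev g k)"
      proof (cases "j = 0")
        case True
        then show ?thesis using A unfolding B_def I'_def sets_Fs Gen_def by simp
      next
        case False
        then have "B j \<in> (\<Union>k\<in>I' j. Ev g k)" unfolding B_def I'_def Ev_def by auto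
        then show ?thesis by auto
      qed
    qed
  qed auto
  moreover have "(\<Inter>j\<in>{0,1,2,3}. B j) = A \<inter> {\<omega>\<in>space M. inc g 0 i \<omega> \<in> Sa \<and> inc g 1 i \<omega> \<in> Sb \<and> inc g 2 i \<omega> \<in> Sc}"
    using Fs_events A sets.sets_into_space unfolding B_def by auto
  moreover have "prob (inc g c i -` S \<inter> space M) = pm g c i S" for c S
    unfolding pm_def by (rule inc_dist[OF gr])
  ultimately show ?thesis
    by (simp add: numeral_3_eq_3 numeral_2_eq_2 B_def mult.assoc)
qed

end

context prob_space
begin

lemma sum_split:
  fixes f1 f2 :: "'a \<Rightarrow> nat"
  assumes E: "E \<in> events" and m1: "f1 \<in> measurable M (count_space UNIV)" and m2: "f2 \<in> measurable M (count_space UNIV)"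
  shows "prob (E \<inter> {\<omega>\<in>space M. f1 \<omega> + f2 \<omega> = n}) = (\<Sum>b\<le>n. prob (E \<inter> {\<omega>\<in>space M. f1 \<omega> = b \<and> f2 \<omega> = n - b}))"
proof -
  have "E \<inter> {\<omega>\<in>space M. f1 \<omega> + f2 \<omega> = n} = (\<Union>b\<in>{..n}. E \<inter> {\<omega>\<in>space M. f1 \<omega> = b \<and> f2 \<omega> = n - b})"
    by auto
  moreover have "prob (\<Union>b\<in>{..n}. E \<inter> {\<omega>\<in>space M. f1 \<omega> = b \<and> f2 \<omega> = n - b}) = (\<Sum>b\<le>n. prob (E \<inter> {\<omega>\<in>space M. f1 \<omega> = b \<and> f2 \<omega> = n - b}))"
  proof (rule finite_measure_finite_Union)
    show "finite {..n}" by simp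
    show "(\<lambda>b. E \<inter> {\<omega> \<in> space M. f1 \<omega> = b \<and> f2 \<omega> = n - b}) ` {..n} \<subseteq> events"
    proof safe
      fix b
      have "(\<lambda>\<omega>. (f1 \<omega>, f2 \<omega>)) \<in> measurable M (count_space UNIV)"
        by (rule meas2[where F=Pair, OF m1 m2])
      then have "(\<lambda>\<omega>. (f1 \<omega>, f2 \<omega>)) -` {(b, n - b)} \<inter> space M \<in> events"
        by (rule measurable_sets) simp
      moreover have "(\<lambda>\<omega>. (f1 \<omega>, f2 \<omega>)) -` {(b, n - b)} \<inter> space M = {\<omega> \<in> space M. f1 \<omega> = b \<and> f2 \<omega> = n - b}"
        by auto
      ultimately show "E \<inter> {\<omega> \<in> space M. f1 \<omega> = b \<and> f2 \<omega> = n - b} \<in> events" using E by auto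
    qed
    show "disjoint_family_on (\<lambda>b. E \<inter> {\<omega> \<in> space M. f1 \<omega> = b \<and> f2 \<omega> = n - b}) {..n}"
      unfolding disjoint_family_on_def by auto
  qed
  ultimately show ?thesis by simp
qed

end

context pws
begin

lemma setFs:
  fixes f :: "'w \<Rightarrow> 'c::countable"
  assumes "f \<in> measurable (Fs g i) (count_space UNIV)"
  shows "{\<omega>\<in>space M. P (f \<omega>)} \<in> sets (Fs g i)"
proof -
  have "f -` {v. P v} \<inter> space (Fs g i) \<in> sets (Fs g i)" by (rule measurable_sets[OF assms]) simp
  moreover have "f -` {v. P v} \<inter> space (Fs g i) = {\<omega>\<in>space M. P (f \<omega>)}" unfolding space_Fs by auto
  ultimately show ?thesis by simp
qed

lemma pm_single: "pm g c i {k} = pmf (poisson_pmf (rate c * (g (Suc i) - g i))) k"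
  unfolding pm_def by (simp add: measure_pmf_single)

lemma pm_UNIV: "pm g c i UNIV = 1"
  unfolding pm_def by simp

lemma rate_simps: "rate 0 = \<alpha>1" "rate 1 = \<alpha>0 - \<alpha>1" "rate 2 = \<alpha>1"
  unfolding rate_def by auto

lemma KI2:
  assumes gr: "grid g" and A: "A \<in> sets (Fs g i)" and c: "c = 0 \<or> c = 2"
  shows "prob (A \<inter> {\<omega>\<in>space M. inc g 1 i \<omega> = b \<and> inc g c i \<omega> = d}) =
     prob A * (pmf (poisson_pmf ((\<alpha>0 - \<alpha>1) * (g (Suc i) - g i))) b * pmf (poisson_pmf (\<alpha>1 * (g (Suc i) - g i))) d)"
  using c
proof
  assume c0: "c = 0"
  have "prob (A \<inter> {\<omega>\<in>space M. inc g 0 i \<omega> \<in> {d} \<and> inc g 1 i \<omega> \<in> {b} \<and> inc g 2 i \<omega> \<in> UNIV})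
    = prob A * pm g 0 i {d} * pm g 1 i {b} * pm g 2 i UNIV" by (rule KI[OF gr A])
  moreover have "{\<omega>\<in>space M. inc g 0 i \<omega> \<in> {d} \<and> inc g 1 i \<omega> \<in> {b} \<and> inc g 2 i \<omega> \<in> UNIV}
     = {\<omega>\<in>space M. inc g 1 i \<omega> = b \<and> inc g c i \<omega> = d}" using c0 by auto
  ultimately show ?thesis unfolding pm_single pm_UNIV rate_simps by simp
next
  assume c2: "c = 2"
  have "prob (A \<inter> {\<omega>\<in>space M. inc g 0 i \<omega> \<in> UNIV \<and> inc g 1 i \<omega> \<in> {b} \<and> inc g 2 i \<omega> \<in> {d}})
    = prob A * pm g 0 i UNIV * pm g 1 i {b} * pm g 2 i {d}" by (rule KI[OF gr A])
  moreover have "{\<omega>\<in>space M. inc g 0 i \<omega> \<in> UNIV \<and> inc g 1 i \<omega> \<in> {b} \<and> inc g 2 i \<omega> \<in> {d}}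
     = {\<omega>\<in>space M. inc g 1 i \<omega> = b \<and> inc g c i \<omega> = d}" using c2 by auto
  ultimately show ?thesis unfolding pm_single pm_UNIV rate_simps by simp
qed

lemma PQ:
  assumes gr: "grid g" and A: "A \<in> sets (Fs g i)" and c: "c = 0 \<or> c = 2"
  shows "prob (A \<inter> {\<omega>\<in>space M. inc g 1 i \<omega> + inc g c i \<omega> = n}) =
     prob A * pmf (poisson_pmf (\<alpha>0 * (g (Suc i) - g i))) n"
proof -
  have h: "0 < g (Suc i) - g i" using grid_less[OF gr, of i] by simp
  have Aev: "A \<in> events" using A Fs_events by auto
  have "prob (A \<inter> {\<omega>\<in>space M. inc g 1 i \<omega> + inc g c i \<omega> = n})
     = (\<Sum>b\<le>n. prob (A \<inter> {\<omega>\<in>space M. inc g 1 i \<omega> = b \<and> inc g c i \<omega> = n - b}))"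
    by (rule sum_split[OF Aev inc_meas inc_meas])
  also have "\<dots> = (\<Sum>b\<le>n. prob A * (pmf (poisson_pmf ((\<alpha>0 - \<alpha>1) * (g (Suc i) - g i))) b * pmf (poisson_pmf (\<alpha>1 * (g (Suc i) - g i))) (n - b)))"
    by (rule sum.cong[OF refl], rule KI2[OF gr A c])
  also have "\<dots> = prob A * (\<Sum>b\<le>n. pmf (poisson_pmf ((\<alpha>0 - \<alpha>1) * (g (Suc i) - g i))) b * pmf (poisson_pmf (\<alpha>1 * (g (Suc i) - g i))) (n - b))"
    by (simp add: sum_distrib_left)
  also have "(\<Sum>b\<le>n. pmf (poisson_pmf ((\<alpha>0 - \<alpha>1) * (g (Suc i) - g i))) b * pmf (poisson_pmf (\<alpha>1 * (g (Suc i) - g i))) (n - b))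
     = pmf (poisson_pmf ((\<alpha>0 - \<alpha>1) * (g (Suc i) - g i) + \<alpha>1 * (g (Suc i) - g i))) n"
    by (rule pois_conv) (use h a01 a1 in auto)
  also have "(\<alpha>0 - \<alpha>1) * (g (Suc i) - g i) + \<alpha>1 * (g (Suc i) - g i) = \<alpha>0 * (g (Suc i) - g i)"
    by (simp add: algebra_simps)
  finally show ?thesis .
qed

definition Cset :: "(nat \<Rightarrow> real) \<Rightarrow> nat \<Rightarrow> 'w set" where
  "Cset g i = {\<omega>\<in>space M. y \<omega> (g i) < Xd g i \<omega>}"

lemma Cset_Fs: "grid g \<Longrightarrow> Cset g i \<in> sets (Fs g i)"
proof -
  assume gr: "grid g"
  have "(\<lambda>\<omega>. (y \<omega> (g i), Xd g i \<omega>)) \<in> measurable (Fs g i) (count_space UNIV)"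
    by (rule meas2[where F=Pair, OF yg_Fs[OF gr] Xd_Fs[OF gr]])
  from setFs[OF this, of "\<lambda>(a, b). a < b"] show ?thesis unfolding Cset_def by simp
qed

lemma SL:
  assumes gr: "grid g" and A: "A \<in> sets (Fs g i)"
  shows "prob (A \<inter> {\<omega>\<in>space M. Xd g (Suc i) \<omega> - Xd g i \<omega> = n}) =
     prob A * pmf (poisson_pmf (\<alpha>0 * (g (Suc i) - g i))) n"
proof -
  let ?\<pi> = "pmf (poisson_pmf (\<alpha>0 * (g (Suc i) - g i))) n"
  have C: "Cset g i \<in> sets (Fs g i)" by (rule Cset_Fs[OF gr])
  have AC: "A \<inter> Cset g i \<in> sets (Fs g i)" using A C by auto
  have AC': "A - Cset g i \<in> sets (Fs g i)" using A C by auto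
  have ev: "S \<in> sets (Fs g i) \<Longrightarrow> S \<in> events" for S using Fs_events by auto
  have "A \<inter> {\<omega>\<in>space M. Xd g (Suc i) \<omega> - Xd g i \<omega> = n} =
    ((A \<inter> Cset g i) \<inter> {\<omega>\<in>space M. inc g 1 i \<omega> + inc g 2 i \<omega> = n}) \<union>
    ((A - Cset g i) \<inter> {\<omega>\<in>space M. inc g 1 i \<omega> + inc g 0 i \<omega> = n})"
    unfolding Cset_def Xd_Suc by auto
  moreover have "prob (((A \<inter> Cset g i) \<inter> {\<omega>\<in>space M. inc g 1 i \<omega> + inc g 2 i \<omega> = n}) \<union>
    ((A - Cset g i) \<inter> {\<omega>\<in>space M. inc g 1 i \<omega> + inc g 0 i \<omega> = n})) =
    prob ((A \<inter> Cset g i) \<inter> {\<omega>\<in>space M. inc g 1 i \<omega> + inc g 2 i \<omega> = n}) +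
    prob ((A - Cset g i) \<inter> {\<omega>\<in>space M. inc g 1 i \<omega> + inc g 0 i \<omega> = n})"
  proof (rule finite_measure_Union)
    have m: "(\<lambda>\<omega>. inc g 1 i \<omega> + inc g c i \<omega>) \<in> measurable M (count_space UNIV)" for c
      by (rule meas2[OF inc_meas inc_meas])
    have "{\<omega>\<in>space M. inc g 1 i \<omega> + inc g c i \<omega> = n} \<in> events" for c
    proof -
      have "(\<lambda>\<omega>. inc g 1 i \<omega> + inc g c i \<omega>) -` {n} \<inter> space M \<in> events" by (rule measurable_sets[OF m]) simp
      moreover have "(\<lambda>\<omega>. inc g 1 i \<omega> + inc g c i \<omega>) -` {n} \<inter> space M = {\<omega>\<in>space M. inc g 1 i \<omega> + inc g c i \<omega> = n}" by auto
      ultimately show ?thesis by simp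
    qed
    then show "(A \<inter> Cset g i) \<inter> {\<omega>\<in>space M. inc g 1 i \<omega> + inc g 2 i \<omega> = n} \<in> events"
      "(A - Cset g i) \<inter> {\<omega>\<in>space M. inc g 1 i \<omega> + inc g 0 i \<omega> = n} \<in> events"
      using ev[OF AC] ev[OF AC'] by auto
    show "(A \<inter> Cset g i) \<inter> {\<omega>\<in>space M. inc g 1 i \<omega> + inc g 2 i \<omega> = n} \<inter>
      ((A - Cset g i) \<inter> {\<omega>\<in>space M. inc g 1 i \<omega> + inc g 0 i \<omega> = n}) = {}" by auto
  qed
  moreover have "prob ((A \<inter> Cset g i) \<inter> {\<omega>\<in>space M. inc g 1 i \<omega> + inc g 2 i \<omega> = n}) = prob (A \<inter> Cset g i) * ?\<pi>"
    by (rule PQ[OF gr AC]) simp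
  moreover have "prob ((A - Cset g i) \<inter> {\<omega>\<in>space M. inc g 1 i \<omega> + inc g 0 i \<omega> = n}) = prob (A - Cset g i) * ?\<pi>"
    by (rule PQ[OF gr AC']) simp
  moreover have "prob (A \<inter> Cset g i) + prob (A - Cset g i) = prob A"
  proof -
    have "prob ((A \<inter> Cset g i) \<union> (A - Cset g i)) = prob (A \<inter> Cset g i) + prob (A - Cset g i)"
      by (rule finite_measure_Union) (use ev[OF AC] ev[OF AC'] in auto)
    moreover have "(A \<inter> Cset g i) \<union> (A - Cset g i) = A" by auto
    ultimately show ?thesis by simp
  qed
  ultimately show ?thesis by (simp add: distrib_right[symmetric])
qed

end

context prob_space
begin

lemma pmf_to_set:
  fixes Z :: "'a \<Rightarrow> nat"
  assumes A: "A \<in> events" and Z: "Z \<in> measurable M (count_space UNIV)"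
    and h: "\<And>n. prob (A \<inter> {\<omega>\<in>space M. Z \<omega> = n}) = c * pmf \<mu> n"
  shows "prob (A \<inter> {\<omega>\<in>space M. Z \<omega> \<in> S}) = c * measure_pmf.prob \<mu> S"
proof -
  define B where "B n = (if n \<in> S then A \<inter> {\<omega>\<in>space M. Z \<omega> = n} else {})" for n
  define C where "C n = (if n \<in> S then {n} else {})" for n
  have Bev: "B n \<in> events" for n
  proof -
    have "Z -` {n} \<inter> space M \<in> events" by (rule measurable_sets[OF Z]) simp
    moreover have "Z -` {n} \<inter> space M = {\<omega>\<in>space M. Z \<omega> = n}" by auto
    ultimately show ?thesis unfolding B_def using A by auto
  qed
  have s1: "(\<lambda>n. prob (B n)) sums prob (\<Union>n. B n)"
  proof (rule finite_measure_UNION)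
    show "range B \<subseteq> events" using Bev by auto
    show "disjoint_family B" unfolding disjoint_family_on_def B_def by auto
  qed
  have s2: "(\<lambda>n. measure_pmf.prob \<mu> (C n)) sums measure_pmf.prob \<mu> (\<Union>n. C n)"
    by (rule measure_pmf.finite_measure_UNION) (auto simp: disjoint_family_on_def C_def)
  have "(\<Union>n. B n) = A \<inter> {\<omega>\<in>space M. Z \<omega> \<in> S}" unfolding B_def by (auto split: if_splits)
  moreover have "(\<Union>n. C n) = S" unfolding C_def by (auto split: if_splits)
  moreover have "prob (B n) = c * measure_pmf.prob \<mu> (C n)" for n
    unfolding B_def C_def using h by (simp add: measure_pmf_single)
  ultimately have "(\<lambda>n. c * measure_pmf.prob \<mu> (C n)) sums prob (A \<inter> {\<omega>\<in>space M. Z \<omega> \<in> S})"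
    "(\<lambda>n. c * measure_pmf.prob \<mu> (C n)) sums (c * measure_pmf.prob \<mu> S)"
    using s1 s2 sums_mult[OF s2, of c] by auto
  then show ?thesis using sums_unique2 by blast
qed

end

context pws
begin

lemma Xd_mono: "i \<le> j \<Longrightarrow> Xd g i \<omega> \<le> Xd g j \<omega>"
  by (induction j rule: dec_induct) (auto simp: Xd_Suc)

lemma diff_meas:
  "f \<in> measurable N (count_space UNIV) \<Longrightarrow> h \<in> measurable N (count_space UNIV) \<Longrightarrow>
   (\<lambda>\<omega>. (f \<omega> :: nat) - h \<omega>) \<in> measurable N (count_space UNIV)"
  by (rule meas2)

lemma BL:
  assumes gr: "grid g" and A: "A \<in> sets (Fs g i)"
  shows "prob (A \<inter> {\<omega>\<in>space M. Xd g (i + Suc d) \<omega> - Xd g i \<omega> = n}) =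
     prob A * pmf (poisson_pmf (\<alpha>0 * (g (i + Suc d) - g i))) n"
proof (induction d arbitrary: n)
  case 0
  then show ?case using SL[OF gr A] by simp
next
  case (Suc d)
  define j where "j = i + Suc d"
  have ij: "i \<le> j" unfolding j_def by simp
  have Aev: "A \<in> events" using A Fs_events by auto
  have m1: "(\<lambda>\<omega>. Xd g j \<omega> - Xd g i \<omega>) \<in> measurable M (count_space UNIV)"
    by (rule diff_meas[OF Xd_M[OF gr] Xd_M[OF gr]])
  have m2: "(\<lambda>\<omega>. Xd g (Suc j) \<omega> - Xd g j \<omega>) \<in> measurable M (count_space UNIV)"
    by (rule diff_meas[OF Xd_M[OF gr] Xd_M[OF gr]])
  have "{\<omega>\<in>space M. Xd g (i + Suc (Suc d)) \<omega> - Xd g i \<omega> = n} =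
      {\<omega>\<in>space M. (Xd g j \<omega> - Xd g i \<omega>) + (Xd g (Suc j) \<omega> - Xd g j \<omega>) = n}"
    using Xd_mono[of i j g] Xd_mono[of j "Suc j" g] unfolding j_def by auto
  then have "prob (A \<inter> {\<omega>\<in>space M. Xd g (i + Suc (Suc d)) \<omega> - Xd g i \<omega> = n}) =
     (\<Sum>k\<le>n. prob (A \<inter> {\<omega>\<in>space M. Xd g j \<omega> - Xd g i \<omega> = k \<and> Xd g (Suc j) \<omega> - Xd g j \<omega> = n - k}))"
    using sum_split[OF Aev m1 m2] by simp
  also have "\<dots> = (\<Sum>k\<le>n. prob A * pmf (poisson_pmf (\<alpha>0 * (g j - g i))) k * pmf (poisson_pmf (\<alpha>0 * (g (Suc j) - g j))) (n - k))"
  proof (rule sum.cong[OF refl])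
    fix k
    define A' where "A' = A \<inter> {\<omega>\<in>space M. Xd g j \<omega> - Xd g i \<omega> = k}"
    have "(\<lambda>\<omega>. Xd g j \<omega> - Xd g i \<omega>) \<in> measurable (Fs g j) (count_space UNIV)"
      by (rule diff_meas[OF Xd_Fs[OF gr] mFs_mono[OF Xd_Fs[OF gr] ij]])
    then have "{\<omega>\<in>space M. Xd g j \<omega> - Xd g i \<omega> = k} \<in> sets (Fs g j)"
      using setFs[of "\<lambda>\<omega>. Xd g j \<omega> - Xd g i \<omega>" g j "\<lambda>v. v = k"] by simp
    moreover have "A \<in> sets (Fs g j)" using Fs_mono[OF ij] A by auto
    ultimately have A': "A' \<in> sets (Fs g j)" unfolding A'_def by auto
    have "A \<inter> {\<omega>\<in>space M. Xd g j \<omega> - Xd g i \<omega> = k \<and> Xd g (Suc j) \<omega> - Xd g j \<omega> = n - k}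
        = A' \<inter> {\<omega>\<in>space M. Xd g (Suc j) \<omega> - Xd g j \<omega> = n - k}" unfolding A'_def by auto
    also have "prob \<dots> = prob A' * pmf (poisson_pmf (\<alpha>0 * (g (Suc j) - g j))) (n - k)"
      by (rule SL[OF gr A'])
    also have "prob A' = prob A * pmf (poisson_pmf (\<alpha>0 * (g j - g i))) k"
      unfolding A'_def j_def by (rule Suc.IH)
    finally show "prob (A \<inter> {\<omega>\<in>space M. Xd g j \<omega> - Xd g i \<omega> = k \<and> Xd g (Suc j) \<omega> - Xd g j \<omega> = n - k}) =
      prob A * pmf (poisson_pmf (\<alpha>0 * (g j - g i))) k * pmf (poisson_pmf (\<alpha>0 * (g (Suc j) - g j))) (n - k)" .
  qed
  also have "\<dots> = prob A * (\<Sum>k\<le>n. pmf (poisson_pmf (\<alpha>0 * (g j - g i))) k * pmf (poisson_pmf (\<alpha>0 * (g (Suc j) - g j))) (n - k))"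
    by (simp add: sum_distrib_left mult.assoc)
  also have "(\<Sum>k\<le>n. pmf (poisson_pmf (\<alpha>0 * (g j - g i))) k * pmf (poisson_pmf (\<alpha>0 * (g (Suc j) - g j))) (n - k))
     = pmf (poisson_pmf (\<alpha>0 * (g j - g i) + \<alpha>0 * (g (Suc j) - g j))) n"
  proof (rule pois_conv)
    have "g i < g j" using gr unfolding grid_def j_def by (auto intro: strict_monoD)
    then show "0 < \<alpha>0 * (g j - g i)" using a01 a1 by auto
    show "0 < \<alpha>0 * (g (Suc j) - g j)" using a01 a1 grid_less[OF gr, of j] by auto
  qed
  also have "\<alpha>0 * (g j - g i) + \<alpha>0 * (g (Suc j) - g j) = \<alpha>0 * (g (i + Suc (Suc d)) - g i)"
    unfolding j_def by (simp add: algebra_simps)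
  finally show ?case .
qed

lemma BLS:
  assumes gr: "grid g" and A: "A \<in> sets (Fs g i)"
  shows "prob (A \<inter> {\<omega>\<in>space M. Xd g (i + Suc d) \<omega> - Xd g i \<omega> \<in> S}) =
     prob A * measure_pmf.prob (poisson_pmf (\<alpha>0 * (g (i + Suc d) - g i))) S"
  by (rule pmf_to_set[OF _ diff_meas[OF Xd_M[OF gr] Xd_M[OF gr]] BL[OF gr A]]) (use A Fs_events in auto)

definition Eblk :: "(nat \<Rightarrow> real) \<Rightarrow> (nat \<Rightarrow> nat) \<Rightarrow> (nat \<Rightarrow> nat set) \<Rightarrow> nat \<Rightarrow> 'w set" where
  "Eblk g b S m = {\<omega>\<in>space M. \<forall>j<m. Xd g (b (Suc j)) \<omega> - Xd g (b j) \<omega> \<in> S j}"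

lemma Eblk_Suc: "Eblk g b S (Suc m) = Eblk g b S m \<inter> {\<omega>\<in>space M. Xd g (b (Suc m)) \<omega> - Xd g (b m) \<omega> \<in> S m}"
  unfolding Eblk_def by (auto simp: less_Suc_eq)

lemma Eblk_Fs:
  assumes gr: "grid g" and b: "strict_mono b"
  shows "Eblk g b S m \<in> sets (Fs g (b m))"
proof (induction m)
  case 0
  have "space (Fs g (b 0)) \<in> sets (Fs g (b 0))" by simp
  then show ?case unfolding Eblk_def space_Fs by simp
next
  case (Suc m)
  have le: "b m \<le> b (Suc m)" using b by (simp add: strict_mono_less_eq)
  have "(\<lambda>\<omega>. Xd g (b (Suc m)) \<omega> - Xd g (b m) \<omega>) \<in> measurable (Fs g (b (Suc m))) (count_space UNIV)"
    by (rule diff_meas[OF Xd_Fs[OF gr] mFs_mono[OF Xd_Fs[OF gr] le]])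
  then have "{\<omega>\<in>space M. Xd g (b (Suc m)) \<omega> - Xd g (b m) \<omega> \<in> S m} \<in> sets (Fs g (b (Suc m)))"
    using setFs[of "\<lambda>\<omega>. Xd g (b (Suc m)) \<omega> - Xd g (b m) \<omega>" g "b (Suc m)" "\<lambda>v. v \<in> S m"] by simp
  moreover have "Eblk g b S m \<in> sets (Fs g (b (Suc m)))" using Suc.IH Fs_mono[OF le] by auto
  ultimately show ?case unfolding Eblk_Suc by auto
qed

lemma MB:
  assumes gr: "grid g" and b: "strict_mono b"
  shows "prob (Eblk g b S m) = (\<Prod>j<m. measure_pmf.prob (poisson_pmf (\<alpha>0 * (g (b (Suc j)) - g (b j)))) (S j))"
proof (induction m)
  case 0
  then show ?case unfolding Eblk_def by (simp add: prob_space)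
next
  case (Suc m)
  have lt: "b m < b (Suc m)" using b by (simp add: strict_mono_less)
  define d where "d = b (Suc m) - b m - 1"
  have bd: "b (Suc m) = b m + Suc d" unfolding d_def using lt by simp
  have "prob (Eblk g b S (Suc m)) = prob (Eblk g b S m) * measure_pmf.prob (poisson_pmf (\<alpha>0 * (g (b (Suc m)) - g (b m)))) (S m)"
    unfolding Eblk_Suc bd by (rule BLS[OF gr Eblk_Fs[OF gr b]])
  then show ?case using Suc.IH by simp
qed

end

definition gn :: "(nat \<Rightarrow> real) \<Rightarrow> nat \<Rightarrow> nat \<Rightarrow> real" where
  "gn u n i = u (i div 2^n) + real (i mod 2^n) / 2^n * (u (Suc (i div 2^n)) - u (i div 2^n))"

lemma gn_blk: "gn u n (j * 2^n) = u j"
  unfolding gn_def by simp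

lemma gn_step: "gn u n (Suc i) - gn u n i = (u (Suc (i div 2^n)) - u (i div 2^n)) / 2^n"
proof (cases "Suc (i mod 2^n) = 2^n")
  case True
  then have d: "Suc i div 2^n = Suc (i div 2^n)" and m: "Suc i mod 2^n = 0"
    using div_Suc[of i "2^n"] mod_Suc[of i "2^n"] by auto
  have "real (Suc (i mod 2^n)) = real (2^n)" using True by simp
  then have r: "real (i mod 2^n) = 2^n - 1" by simp
  show ?thesis unfolding gn_def d m r by (simp add: field_simps)
next
  case False
  then have d: "Suc i div 2^n = i div 2^n" and m: "Suc i mod 2^n = Suc (i mod 2^n)"
    using div_Suc[of i "2^n"] mod_Suc[of i "2^n"] by auto
  show ?thesis unfolding gn_def d m by (simp add: field_simps)
qed

lemma gn_step_pos: "strict_mono u \<Longrightarrow> gn u n i < gn u n (Suc i)"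
proof -
  assume u: "strict_mono u"
  have "u (i div 2^n) < u (Suc (i div 2^n))" using strict_monoD[OF u, of "i div 2^n" "Suc (i div 2^n)"] by simp
  then have "0 < (u (Suc (i div 2^n)) - u (i div 2^n)) / 2^n" by simp
  then show ?thesis using gn_step[of u n i] by linarith
qed

lemma gn_strict: "strict_mono u \<Longrightarrow> strict_mono (gn u n)"
  using gn_step_pos strict_mono_Suc_iff by blast

lemma gn_0: "gn u n 0 = u 0" unfolding gn_def by simp

lemma gn_step_le:
  assumes u: "strict_mono u" "u 0 = 0" and k: "k < m * 2^n"
  shows "gn u n (Suc k) - gn u n k \<le> u m / 2^n"
proof -
  have "k div 2^n < m" using k by (simp add: div_less_iff_less_mult)
  then have "u (Suc (k div 2^n)) \<le> u m" using u(1) by (simp add: strict_mono_less_eq)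
  moreover have "0 \<le> u (k div 2^n)" using u strict_mono_less_eq[OF u(1), of 0 "k div 2^n"] by simp
  ultimately have "u (Suc (k div 2^n)) - u (k div 2^n) \<le> u m" by simp
  then show ?thesis unfolding gn_step by (simp add: divide_right_mono)
qed

context pws
begin

lemma gn_grid:
  assumes "strict_mono u" "u 0 = 0"
  shows "grid (gn u n)"
proof -
  have "strict_mono (gn u n)" by (rule gn_strict[OF assms(1)])
  moreover have "gn u n 0 = 0" using assms(2) gn_0[of u n] by simp
  ultimately show ?thesis unfolding grid_def by simp
qed

definition zinc :: "(nat \<Rightarrow> real) \<Rightarrow> nat \<Rightarrow> 'w \<Rightarrow> nat" where
  "zinc g k \<omega> = inc g 0 k \<omega> + inc g 1 k \<omega> + inc g 2 k \<omega>"

definition Tset :: "(nat \<Rightarrow> real) \<Rightarrow> nat \<Rightarrow> nat set \<Rightarrow> nat set \<Rightarrow> nat set \<Rightarrow> 'w set" where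
  "Tset g k Sa Sb Sc = {\<omega>\<in>space M. inc g 0 k \<omega> \<in> Sa \<and> inc g 1 k \<omega> \<in> Sb \<and> inc g 2 k \<omega> \<in> Sc}"

lemma Tset_prob: "grid g \<Longrightarrow> prob (Tset g k Sa Sb Sc) = pm g 0 k Sa * pm g 1 k Sb * pm g 2 k Sc"
proof -
  assume gr: "grid g"
  have sp: "space M \<in> sets (Fs g k)" using sets.top[of "Fs g k"] unfolding space_Fs .
  have "prob (space M \<inter> Tset g k Sa Sb Sc) = prob (space M) * pm g 0 k Sa * pm g 1 k Sb * pm g 2 k Sc"
    unfolding Tset_def by (rule KI[OF gr sp])
  moreover have "space M \<inter> Tset g k Sa Sb Sc = Tset g k Sa Sb Sc" unfolding Tset_def by auto
  ultimately show ?thesis by (simp add: prob_space)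
qed

lemma Tset_ev: "Tset g k Sa Sb Sc \<in> events"
proof -
  have m: "(\<lambda>\<omega>. (inc g 0 k \<omega>, inc g 1 k \<omega>, inc g 2 k \<omega>)) \<in> measurable M (count_space UNIV)"
    by (rule meas2[where F=Pair, OF inc_meas meas2[where F=Pair, OF inc_meas inc_meas]])
  have "(\<lambda>\<omega>. (inc g 0 k \<omega>, inc g 1 k \<omega>, inc g 2 k \<omega>)) -` (Sa \<times> Sb \<times> Sc) \<inter> space M \<in> events"
    by (rule measurable_sets[OF m]) simp
  moreover have "(\<lambda>\<omega>. (inc g 0 k \<omega>, inc g 1 k \<omega>, inc g 2 k \<omega>)) -` (Sa \<times> Sb \<times> Sc) \<inter> space M = Tset g k Sa Sb Sc"
    unfolding Tset_def by auto
  ultimately show ?thesis by simp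
qed

lemma prob_sub2: "A \<in> events \<Longrightarrow> B \<in> events \<Longrightarrow> prob (A \<union> B) \<le> prob A + prob B"
  by (rule measure_subadditive) (auto simp: emeasure_eq_measure)

lemma pm_nonneg: "0 \<le> pm g c k S" unfolding pm_def by simp

lemma pm_G1: "grid g \<Longrightarrow> pm g c k {n. 1 \<le> n} \<le> rate c * (g (Suc k) - g k)"
  unfolding pm_def by (rule pois_ge1) (use rate_pos[of c] grid_less[of g k] in auto)

lemma pm_G2: "grid g \<Longrightarrow> pm g c k {n. 2 \<le> n} \<le> (rate c * (g (Suc k) - g k))^2"
  unfolding pm_def by (rule pois_ge2) (use rate_pos[of c] grid_less[of g k] in auto)

lemma ZB:
  assumes gr: "grid g"
  shows "prob {\<omega>\<in>space M. 2 \<le> zinc g k \<omega>} \<le> ((\<alpha>0 + \<alpha>1) * (g (Suc k) - g k))^2"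
proof -
  define U where "U = (UNIV :: nat set)"
  define G1 where "G1 = {n::nat. 1 \<le> n}"
  define G2 where "G2 = {n::nat. 2 \<le> n}"
  define l0 where "l0 = rate 0 * (g (Suc k) - g k)"
  define l1 where "l1 = rate 1 * (g (Suc k) - g k)"
  define l2 where "l2 = rate 2 * (g (Suc k) - g k)"
  have h: "0 < g (Suc k) - g k" using grid_less[OF gr, of k] by simp
  have l: "0 \<le> l0" "0 \<le> l1" "0 \<le> l2" unfolding l0_def l1_def l2_def
    by (intro mult_nonneg_nonneg less_imp_le rate_pos, use h in linarith)+
  have lsum: "l0 + l1 + l2 = (\<alpha>0 + \<alpha>1) * (g (Suc k) - g k)"
    unfolding l0_def l1_def l2_def rate_simps by (simp add: algebra_simps)
  have sub: "{\<omega>\<in>space M. 2 \<le> zinc g k \<omega>} \<subseteq>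
    ((Tset g k G2 U U \<union> Tset g k U G2 U) \<union> (Tset g k U U G2 \<union> Tset g k G1 G1 U)) \<union> (Tset g k G1 U G1 \<union> Tset g k U G1 G1)"
    unfolding Tset_def zinc_def U_def G1_def G2_def by auto
  have ev: "Tset g k A B C \<in> events" for A B C by (rule Tset_ev)
  have "prob {\<omega>\<in>space M. 2 \<le> zinc g k \<omega>} \<le>
    prob (((Tset g k G2 U U \<union> Tset g k U G2 U) \<union> (Tset g k U U G2 \<union> Tset g k G1 G1 U)) \<union> (Tset g k G1 U G1 \<union> Tset g k U G1 G1))"
    by (rule finite_measure_mono[OF sub]) (use ev in auto)
  also have "\<dots> \<le> (prob (Tset g k G2 U U) + prob (Tset g k U G2 U) + (prob (Tset g k U U G2) + prob (Tset g k G1 G1 U)))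
     + (prob (Tset g k G1 U G1) + prob (Tset g k U G1 G1))"
    by (intro order.trans[OF prob_sub2] add_mono) (use ev in auto)
  also have "\<dots> = l0^2 * 1 * 1 + 1 * l1^2 * 1 + 1 * 1 * l2^2 + l0 * l1 + l0 * l2 + l1 * l2 + 
     ((pm g 0 k G2 - l0^2) + (pm g 1 k G2 - l1^2) + (pm g 2 k G2 - l2^2) + (pm g 0 k G1 * pm g 1 k G1 - l0 * l1)
      + (pm g 0 k G1 * pm g 2 k G1 - l0 * l2) + (pm g 1 k G1 * pm g 2 k G1 - l1 * l2))"
    unfolding Tset_prob[OF gr] U_def pm_UNIV by (simp add: algebra_simps)
  also have "\<dots> \<le> l0^2 * 1 * 1 + 1 * l1^2 * 1 + 1 * 1 * l2^2 + l0 * l1 + l0 * l2 + l1 * l2 + 0"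
  proof -
    have a: "pm g c k G1 \<le> rate c * (g (Suc k) - g k)" "pm g c k G2 \<le> (rate c * (g (Suc k) - g k))^2" for c
      unfolding G1_def G2_def using pm_G1[OF gr] pm_G2[OF gr] by auto
    have b: "pm g c k G1 * pm g c' k G1 \<le> (rate c * (g (Suc k) - g k)) * (rate c' * (g (Suc k) - g k))" for c c'
      by (rule mult_mono[OF a(1) a(1)]) (use rate_pos[of c] h pm_nonneg in \<open>auto intro: mult_nonneg_nonneg less_imp_le\<close>)
    show ?thesis using a[of 0] a[of 1] a[of 2] b[of 0 1] b[of 0 2] b[of 1 2]
      unfolding l0_def l1_def l2_def by simp
  qed
  also have "\<dots> \<le> (l0 + l1 + l2)^2"
    using l by (simp add: power2_eq_square algebra_simps)
  finally show ?thesis unfolding lsum .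
qed

lemma AG:
  assumes gr: "grid g" and w: "\<omega> \<in> space M"
  shows "(\<forall>k<i. zinc g k \<omega> \<le> 1) \<Longrightarrow> Xd g i \<omega> = x \<omega> (g i) \<and> y \<omega> (g i) \<le> x \<omega> (g i)"
proof (induction i)
  case 0
  have g0: "g 0 = 0" using gr unfolding grid_def by auto
  have "x \<omega> 0 = 0" "y \<omega> 0 = 0" using cp_zero xcp w Wcp[OF w, of 0] unfolding W012 by auto
  then show ?case by (simp add: Xd_0 g0)
next
  case (Suc i)
  then have IH: "Xd g i \<omega> = x \<omega> (g i)" "y \<omega> (g i) \<le> x \<omega> (g i)" by auto
  have small: "zinc g i \<omega> \<le> 1" using Suc.prems by auto
  have J: "jeq (x \<omega>) (y \<omega>) (p \<omega>) (q \<omega>)" unfolding jeq_def using xj w by blast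
  have cps: "counting_path (y \<omega>)" "counting_path (p \<omega>)" "counting_path (q \<omega>)" "counting_path (x \<omega>)"
    using Wcp[OF w, of 0] Wcp[OF w, of 1] Wcp[OF w, of 2] xcp w unfolding W012 by auto
  have st: "x \<omega> (g (Suc i)) = x \<omega> (g i) + (p \<omega> (g (Suc i)) - p \<omega> (g i)) +
     (if y \<omega> (g i) < x \<omega> (g i) then q \<omega> (g (Suc i)) - q \<omega> (g i) else y \<omega> (g (Suc i)) - y \<omega> (g i))
     \<and> y \<omega> (g (Suc i)) \<le> x \<omega> (g (Suc i))"
    by (rule path_step[OF cps J grid_nonneg[OF gr] grid_less[OF gr] _ IH(2)])
      (use small in \<open>simp add: zinc_def inc_def W_def\<close>)
  then show ?case using IH unfolding Xd_Suc inc_def W_def by simp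
qed

end

lemma small_forall:
  fixes d B :: real
  assumes "\<And>n::nat. d \<le> B / 2^n" "0 \<le> B"
  shows "d \<le> 0"
proof (rule ccontr)
  assume "\<not> d \<le> 0"
  then have d: "0 < d" by simp
  obtain n :: nat where n: "B / d < 2^n" using real_arch_pow[of 2 "B / d"] by auto
  then have "B < d * 2^n" using d by (simp add: field_simps)
  then have "B / 2^n < d" by (simp add: field_simps)
  then show False using assms(1)[of n] by simp
qed

context pws
begin

lemma ev_forall:
  fixes f :: "nat \<Rightarrow> 'w \<Rightarrow> nat"
  assumes "\<And>j. f j \<in> measurable M (count_space UNIV)"
  shows "{\<omega>\<in>space M. \<forall>j<m. f j \<omega> \<in> S j} \<in> events"
proof (induction m)
  case 0
  then show ?case by simp
next
  case (Suc m)
  have eq: "{\<omega>\<in>space M. \<forall>j<Suc m. f j \<omega> \<in> S j} = {\<omega>\<in>space M. \<forall>j<m. f j \<omega> \<in> S j} \<inter> (f m -` S m \<inter> space M)"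
    by (auto simp: less_Suc_eq)
  have "f m -` S m \<inter> space M \<in> events" by (rule measurable_sets[OF assms]) simp
  from sets.Int[OF Suc.IH this] show ?case unfolding eq .
qed

lemma zinc_meas: "zinc g k \<in> measurable M (count_space UNIV)"
  unfolding zinc_def[abs_def] by (rule meas2[where F="(+)", OF meas2[where F="(+)", OF inc_meas inc_meas] inc_meas])

lemma MT:
  assumes u: "strict_mono u" "u 0 = 0"
  shows "prob {\<omega>\<in>space M. \<forall>j<m. x \<omega> (u (Suc j)) - x \<omega> (u j) \<in> S j} =
    (\<Prod>j<m. measure_pmf.prob (poisson_pmf (\<alpha>0 * (u (Suc j) - u j))) (S j))"
proof -
  define E where "E = {\<omega>\<in>space M. \<forall>j<m. x \<omega> (u (Suc j)) - x \<omega> (u j) \<in> S j}"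
  define P where "P = (\<Prod>j<m. measure_pmf.prob (poisson_pmf (\<alpha>0 * (u (Suc j) - u j))) (S j))"
  define C where "C = (\<alpha>0 + \<alpha>1)^2"
  have C0: "0 \<le> C" unfolding C_def by simp
  have xm: "\<And>t. (\<lambda>\<omega>. x \<omega> t) \<in> measurable M (count_space UNIV)" using xmeas by auto
  have Eev: "E \<in> events" unfolding E_def
    by (rule ev_forall, rule meas2[where F="(-)", OF xm xm])
  have bound: "\<bar>prob E - P\<bar> \<le> C * (u m)^2 / 2^n" for n
  proof -
    define g where "g = gn u n"
    define b where "b = (\<lambda>j::nat. j * 2^n)"
    define K where "K = m * 2^n"
    have gr: "grid g" unfolding g_def by (rule gn_grid[OF u])
    have bm: "strict_mono b" unfolding b_def strict_mono_def by simp
    have gb: "g (b j) = u j" for j unfolding g_def b_def by (rule gn_blk)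
    have MBP: "prob (Eblk g b S m) = P" unfolding MB[OF gr bm] P_def gb ..
    define Z where "Z k = {\<omega>\<in>space M. 2 \<le> zinc g k \<omega>}" for k
    define Bad where "Bad = (\<Union>k\<in>{..<K}. Z k)"
    have Zev: "Z k \<in> events" for k
    proof -
      have "zinc g k -` {n. 2 \<le> n} \<inter> space M \<in> events" by (rule measurable_sets[OF zinc_meas]) simp
      moreover have "zinc g k -` {n. 2 \<le> n} \<inter> space M = Z k" unfolding Z_def by auto
      ultimately show ?thesis by simp
    qed
    have Badev: "Bad \<in> events" unfolding Bad_def by (rule sets.finite_UN, simp, rule Zev)
    have Eblkev: "Eblk g b S m \<in> events" using Eblk_Fs[OF gr bm, of S m] Fs_events[of g "b m"] by blast
    have hnn: "0 \<le> g (Suc k) - g k" for k using grid_less[OF gr, of k] by simp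
    have hle: "g (Suc k) - g k \<le> u m / 2^n" if "k < K" for k
      unfolding g_def by (rule gn_step_le[OF u]) (use that K_def in simp)
    have "prob Bad \<le> (\<Sum>k<K. prob (Z k))"
      unfolding Bad_def by (rule finite_measure_subadditive_finite) (use Zev in auto)
    also have "\<dots> \<le> (\<Sum>k<K. C * (u m / 2^n) * (g (Suc k) - g k))"
    proof (rule sum_mono)
      fix k assume k: "k \<in> {..<K}"
      have "prob (Z k) \<le> ((\<alpha>0 + \<alpha>1) * (g (Suc k) - g k))^2" unfolding Z_def by (rule ZB[OF gr])
      also have "\<dots> = C * ((g (Suc k) - g k) * (g (Suc k) - g k))" unfolding C_def by (simp add: power2_eq_square algebra_simps)
      also have "\<dots> \<le> C * ((u m / 2^n) * (g (Suc k) - g k))"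
        by (intro mult_left_mono mult_right_mono hle hnn C0) (use k in auto)
      finally show "prob (Z k) \<le> C * (u m / 2^n) * (g (Suc k) - g k)" by (simp add: mult.assoc)
    qed
    also have "\<dots> = C * (u m / 2^n) * (\<Sum>k<K. g (Suc k) - g k)" by (simp add: sum_distrib_left)
    also have "(\<Sum>k<K. g (Suc k) - g k) = u m"
      unfolding sum_lessThan_telescope using gb[of m] gr unfolding b_def K_def grid_def by simp
    finally have pBad: "prob Bad \<le> C * (u m)^2 / 2^n" by (simp add: power2_eq_square)
    have agree: "Xd g (b j) \<omega> = x \<omega> (u j)" if "\<omega> \<in> space M" "\<omega> \<notin> Bad" "j \<le> m" for \<omega> j
    proof -
      have "\<forall>k<b j. zinc g k \<omega> \<le> 1"
      proof (intro allI impI)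
        fix k assume "k < b j"
        then have "k < K" using that(3) unfolding b_def K_def
          by (meson less_le_trans mult_le_mono1)
        then have "\<omega> \<notin> Z k" using that(2) unfolding Bad_def by auto
        then show "zinc g k \<omega> \<le> 1" using that(1) unfolding Z_def by auto
      qed
      then show ?thesis using AG[OF gr that(1)] gb[of j] by auto
    qed
    have "E - Bad = Eblk g b S m - Bad"
    proof -
      have "\<omega> \<in> E \<longleftrightarrow> \<omega> \<in> Eblk g b S m" if "\<omega> \<in> space M" "\<omega> \<notin> Bad" for \<omega>
        unfolding E_def Eblk_def using agree[OF that] that(1) by auto
      moreover have "E \<subseteq> space M" "Eblk g b S m \<subseteq> space M" unfolding E_def Eblk_def by auto
      ultimately show ?thesis by blast
    qed
    then have s1: "E \<subseteq> Eblk g b S m \<union> Bad" and s2: "Eblk g b S m \<subseteq> E \<union> Bad" by blast+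
    have "prob E \<le> prob (Eblk g b S m \<union> Bad)" by (rule finite_measure_mono[OF s1]) (use Eblkev Badev in auto)
    also have "\<dots> \<le> prob (Eblk g b S m) + prob Bad" by (rule prob_sub2[OF Eblkev Badev])
    finally have i1: "prob E \<le> P + prob Bad" unfolding MBP .
    have "prob (Eblk g b S m) \<le> prob (E \<union> Bad)" by (rule finite_measure_mono[OF s2]) (use Eev Badev in auto)
    also have "\<dots> \<le> prob E + prob Bad" by (rule prob_sub2[OF Eev Badev])
    finally have i2: "P \<le> prob E + prob Bad" unfolding MBP .
    show ?thesis using i1 i2 pBad by linarith
  qed
  have "\<bar>prob E - P\<bar> \<le> 0"
    by (rule small_forall[OF bound]) (use C0 in simp)
  then show ?thesis unfolding E_def P_def by simp
qed

end

definition ext_ts :: "(nat \<Rightarrow> real) \<Rightarrow> nat \<Rightarrow> nat \<Rightarrow> real" where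
  "ext_ts ts k j = (if j \<le> k then ts j else ts k + real (j - k))"

lemma ext_ts_strict:
  assumes "\<forall>i<k. ts i < ts (Suc i)"
  shows "strict_mono (ext_ts ts k)"
  unfolding strict_mono_Suc_iff
proof
  fix j
  show "ext_ts ts k j < ext_ts ts k (Suc j)"
  proof (cases "j < k")
    case True
    then show ?thesis using assms unfolding ext_ts_def by auto
  next
    case False
    then have "Suc j - k = Suc (j - k)" by auto
    then show ?thesis using False unfolding ext_ts_def by auto
  qed
qed

context pws
begin

lemma MT_shift:
  assumes u: "strict_mono u" "u 0 = 0"
  shows "prob {\<omega>\<in>space M. \<forall>i<k. x \<omega> (u (Suc (Suc i))) - x \<omega> (u (Suc i)) \<in> T i} =
    (\<Prod>i<k. measure_pmf.prob (poisson_pmf (\<alpha>0 * (u (Suc (Suc i)) - u (Suc i)))) (T i))"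
proof -
  define S where "S j = (if j = 0 then UNIV else T (j - 1))" for j
  have "prob {\<omega>\<in>space M. \<forall>j<Suc k. x \<omega> (u (Suc j)) - x \<omega> (u j) \<in> S j} =
    (\<Prod>j<Suc k. measure_pmf.prob (poisson_pmf (\<alpha>0 * (u (Suc j) - u j))) (S j))"
    by (rule MT[OF u])
  moreover have "{\<omega>\<in>space M. \<forall>j<Suc k. x \<omega> (u (Suc j)) - x \<omega> (u j) \<in> S j} =
     {\<omega>\<in>space M. \<forall>i<k. x \<omega> (u (Suc (Suc i))) - x \<omega> (u (Suc i)) \<in> T i}"
    unfolding S_def by (auto simp: less_Suc_eq_0_disj)
  moreover have "(\<Prod>j<Suc k. measure_pmf.prob (poisson_pmf (\<alpha>0 * (u (Suc j) - u j))) (S j)) =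
    (\<Prod>i<k. measure_pmf.prob (poisson_pmf (\<alpha>0 * (u (Suc (Suc i)) - u (Suc i)))) (T i))"
    unfolding prod.lessThan_Suc_shift S_def by simp
  ultimately show ?thesis by simp
qed

lemma MT2:
  assumes ts: "0 \<le> ts 0" "\<forall>i<k. ts i < ts (Suc i)"
  shows "prob {\<omega>\<in>space M. \<forall>i<k. x \<omega> (ts (Suc i)) - x \<omega> (ts i) \<in> T i} =
    (\<Prod>i<k. measure_pmf.prob (poisson_pmf (\<alpha>0 * (ts (Suc i) - ts i))) (T i))"
proof (cases "ts 0 = 0")
  case True
  define u where "u = ext_ts ts k"
  have u: "strict_mono u" "u 0 = 0" unfolding u_def using ext_ts_strict[OF ts(2)] True
    by (auto simp: ext_ts_def)
  have ue: "i < k \<Longrightarrow> u i = ts i" "i < k \<Longrightarrow> u (Suc i) = ts (Suc i)" for i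
    unfolding u_def ext_ts_def by auto
  have "{\<omega>\<in>space M. \<forall>i<k. x \<omega> (ts (Suc i)) - x \<omega> (ts i) \<in> T i} =
      {\<omega>\<in>space M. \<forall>i<k. x \<omega> (u (Suc i)) - x \<omega> (u i) \<in> T i}" using ue by auto
  moreover have "(\<Prod>i<k. measure_pmf.prob (poisson_pmf (\<alpha>0 * (ts (Suc i) - ts i))) (T i)) =
      (\<Prod>i<k. measure_pmf.prob (poisson_pmf (\<alpha>0 * (u (Suc i) - u i))) (T i))"
    by (rule prod.cong) (auto simp: ue)
  ultimately show ?thesis using MT[OF u] by simp
next
  case False
  then have pos: "0 < ts 0" using ts(1) by simp
  define u where "u j = (if j = 0 then 0 else ext_ts ts k (j - 1))" for j
  have es: "strict_mono (ext_ts ts k)" by (rule ext_ts_strict[OF ts(2)])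
  have u: "strict_mono u" "u 0 = 0"
  proof -
    show "strict_mono u" unfolding strict_mono_Suc_iff
    proof
      fix j show "u j < u (Suc j)"
      proof (cases j)
        case 0 then show ?thesis using pos unfolding u_def ext_ts_def by simp
      next
        case (Suc j') then show ?thesis using strict_monoD[OF es, of j' "Suc j'"] unfolding u_def by simp
      qed
    qed
    show "u 0 = 0" unfolding u_def by simp
  qed
  have ue: "i < k \<Longrightarrow> u (Suc i) = ts i" "i < k \<Longrightarrow> u (Suc (Suc i)) = ts (Suc i)" for i
    unfolding u_def ext_ts_def by auto
  have "{\<omega>\<in>space M. \<forall>i<k. x \<omega> (ts (Suc i)) - x \<omega> (ts i) \<in> T i} =
      {\<omega>\<in>space M. \<forall>i<k. x \<omega> (u (Suc (Suc i))) - x \<omega> (u (Suc i)) \<in> T i}" using ue by auto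
  moreover have "(\<Prod>i<k. measure_pmf.prob (poisson_pmf (\<alpha>0 * (ts (Suc i) - ts i))) (T i)) =
      (\<Prod>i<k. measure_pmf.prob (poisson_pmf (\<alpha>0 * (u (Suc (Suc i)) - u (Suc i)))) (T i))"
    by (rule prod.cong) (auto simp: ue)
  ultimately show ?thesis using MT_shift[OF u] by simp
qed

lemma x_indep:
  assumes ts: "0 \<le> ts 0" "\<forall>i<k. ts i < ts (Suc i)"
  shows "indep_vars (\<lambda>_. count_space UNIV) (\<lambda>i \<omega>. x \<omega> (ts (Suc i)) - x \<omega> (ts i)) {..<k}"
  unfolding indep_vars_def2
proof
  have xm: "\<And>t. (\<lambda>\<omega>. x \<omega> t) \<in> measurable M (count_space UNIV)" using xmeas by auto
  have Xm: "(\<lambda>\<omega>. x \<omega> (ts (Suc i)) - x \<omega> (ts i)) \<in> measurable M (count_space UNIV)" for i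
    by (rule meas2[where F="(-)", OF xm xm])
  show "\<forall>i\<in>{..<k}. random_variable (count_space UNIV) (\<lambda>\<omega>. x \<omega> (ts (Suc i)) - x \<omega> (ts i))"
    using Xm by simp
  define pois where "pois i S = measure_pmf.prob (poisson_pmf (\<alpha>0 * (ts (Suc i) - ts i))) S" for i S
  show "indep_sets (\<lambda>i. {(\<lambda>\<omega>. x \<omega> (ts (Suc i)) - x \<omega> (ts i)) -` A \<inter> space M |A. A \<in> sets (count_space UNIV)}) {..<k}"
  proof (rule indep_setsI)
    fix i
    show "{(\<lambda>\<omega>. x \<omega> (ts (Suc i)) - x \<omega> (ts i)) -` A \<inter> space M |A. A \<in> sets (count_space UNIV)} \<subseteq> events"
      using measurable_sets[OF Xm] by auto
  next
    fix A J assume J: "J \<noteq> {}" "J \<subseteq> {..<k}" "finite J"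
      and A: "\<forall>j\<in>J. A j \<in> {(\<lambda>\<omega>. x \<omega> (ts (Suc j)) - x \<omega> (ts j)) -` A \<inter> space M |A. A \<in> sets (count_space UNIV)}"
    then have "\<forall>j\<in>J. \<exists>T. A j = (\<lambda>\<omega>. x \<omega> (ts (Suc j)) - x \<omega> (ts j)) -` T \<inter> space M" by auto
    then obtain T where T: "\<And>j. j \<in> J \<Longrightarrow> A j = (\<lambda>\<omega>. x \<omega> (ts (Suc j)) - x \<omega> (ts j)) -` T j \<inter> space M"
      by metis
    define T' where "T' i = (if i \<in> J then T i else UNIV)" for i
    have "(\<Inter>j\<in>J. A j) = {\<omega>\<in>space M. \<forall>i<k. x \<omega> (ts (Suc i)) - x \<omega> (ts i) \<in> T' i}"
    proof -
      obtain j0 where "j0 \<in> J" using J(1) by auto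
      then show ?thesis using T J(2) unfolding T'_def by auto
    qed
    then have "prob (\<Inter>j\<in>J. A j) = (\<Prod>i<k. pois i (T' i))" unfolding pois_def using MT2[OF ts] by simp
    also have "\<dots> = (\<Prod>i\<in>J. pois i (T' i))"
      by (rule prod.mono_neutral_right) (use J in \<open>auto simp: T'_def pois_def\<close>)
    also have "\<dots> = (\<Prod>j\<in>J. prob (A j))"
    proof (rule prod.cong[OF refl])
      fix j assume j: "j \<in> J"
      define T'' where "T'' i = (if i = j then T j else UNIV)" for i
      have jk: "j < k" using j J(2) by auto
      have "A j = {\<omega>\<in>space M. \<forall>i<k. x \<omega> (ts (Suc i)) - x \<omega> (ts i) \<in> T'' i}"
        unfolding T[OF j] T''_def using jk by auto
      then have "prob (A j) = (\<Prod>i<k. pois i (T'' i))" unfolding pois_def using MT2[OF ts] by simp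
      also have "\<dots> = (\<Prod>i<k. if i = j then pois j (T j) else 1)"
        by (rule prod.cong) (auto simp: T''_def pois_def)
      also have "\<dots> = pois j (T j)"
        using jk by (subst prod.delta) auto
      finally show "pois j (T' j) = prob (A j)" using j unfolding T'_def by simp
    qed
    finally show "prob (\<Inter>j\<in>J. A j) = (\<Prod>j\<in>J. prob (A j))" .
  qed
qed

lemma x_distr:
  assumes st: "0 \<le> s" "s < t"
  shows "distr M (count_space UNIV) (\<lambda>\<omega>. x \<omega> t - x \<omega> s) = measure_pmf (poisson_pmf (\<alpha>0 * (t - s)))"
proof (rule measure_eqI)
  have xm: "\<And>t. (\<lambda>\<omega>. x \<omega> t) \<in> measurable M (count_space UNIV)" using xmeas by auto
  have Xm: "(\<lambda>\<omega>. x \<omega> t - x \<omega> s) \<in> measurable M (count_space UNIV)"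
    by (rule meas2[where F="(-)", OF xm xm])
  show "sets (distr M (count_space UNIV) (\<lambda>\<omega>. x \<omega> t - x \<omega> s)) = sets (measure_pmf (poisson_pmf (\<alpha>0 * (t - s))))"
    by simp
  fix A assume "A \<in> sets (distr M (count_space UNIV) (\<lambda>\<omega>. x \<omega> t - x \<omega> s))"
  define ts where "ts i = (if i = 0 then s else t)" for i :: nat
  have "prob {\<omega>\<in>space M. \<forall>i<1. x \<omega> (ts (Suc i)) - x \<omega> (ts i) \<in> A} =
    (\<Prod>i<1. measure_pmf.prob (poisson_pmf (\<alpha>0 * (ts (Suc i) - ts i))) A)"
    by (rule MT2) (use st in \<open>auto simp: ts_def\<close>)
  then have "prob ((\<lambda>\<omega>. x \<omega> t - x \<omega> s) -` A \<inter> space M) = measure_pmf.prob (poisson_pmf (\<alpha>0 * (t - s))) A"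
    unfolding ts_def by (simp add: Int_def conj_commute vimage_def)
  then show "emeasure (distr M (count_space UNIV) (\<lambda>\<omega>. x \<omega> t - x \<omega> s)) A = emeasure (measure_pmf (poisson_pmf (\<alpha>0 * (t - s)))) A"
    by (simp add: emeasure_distr[OF Xm] emeasure_eq_measure measure_pmf.emeasure_eq_measure)
qed

lemma main: "poisson_process M \<alpha>0 x"
  unfolding poisson_process_def
  using xcp xmeas x_indep x_distr by blast

end

theorem theorem1p3:
  fixes M :: "'w measure" and \<alpha>0 \<alpha>1 :: real
    and y p q x :: "'w \<Rightarrow> real \<Rightarrow> nat"
  assumes "prob_space M"
    and "\<alpha>0 > \<alpha>1" and "\<alpha>1 > 0"
    and "poisson_process M \<alpha>1 y"
    and "poisson_process M (\<alpha>0 - \<alpha>1) p"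
    and "poisson_process M \<alpha>1 q"
    and "prob_space.indep_vars M (\<lambda>_. Pi\<^sub>M UNIV (\<lambda>_. count_space UNIV))
           (\<lambda>i. if i = (0::nat) then y else if i = 1 then p else q) {0, 1, 2}"
    and "\<forall>t. (\<lambda>\<omega>. x \<omega> t) \<in> measurable M (count_space UNIV)"
    and "\<forall>\<omega>\<in>space M. counting_path (x \<omega>)"
    and "\<forall>\<omega>\<in>space M. \<forall>t>0.
           x \<omega> t = lft (x \<omega>) t
             + (if p \<omega> t \<noteq> lft (p \<omega>) t then 1 else 0)
             + (if q \<omega> t \<noteq> lft (q \<omega>) t \<and> lft (x \<omega>) t > lft (y \<omega>) t then 1 else 0)
             + (if y \<omega> t \<noteq> lft (y \<omega>) t \<and> lft (x \<omega>) t = lft (y \<omega>) t then 1 else 0)"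
  shows "poisson_process M \<alpha>0 x"
proof -
  have "pws M \<alpha>0 \<alpha>1 y p q x"
    unfolding pws_def pws_axioms_def by (intro conjI assms)
  then interpret pws M \<alpha>0 \<alpha>1 y p q x .
  show ?thesis by (rule main)
qed


end
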